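(* Let $N\ge3$. (a) $\mathcal F:(\mathbb{Q}(\mu_N)\langle\langle\widetilde X\rangle\rangle,\widehat\Delta_{\tilde{sh}})\to(\mathbb{Q}(\mu_N)\langle\langle X\rangle\rangle,\widehat\Delta_{sh})$ is a Hopf algebra isomorphism, i.e. an algebra isomorphism satisfying $\widehat\Delta_{sh}\circ\mathcal F=\mathcal F^{\otimes2}\circ\widehat\Delta_{\tilde{sh}}$. (b) $\mathcal F_Y:(\mathbb{Q}(\mu_N)\langle\langle\widetilde Y\rangle\rangle,\widehat\Delta_{\tilde*})\to(\mathbb{Q}(\mu_N)\langle\langle Y\rangle\rangle,\widehat\Delta_* )$ is a Hopf algebra isomorphism, i.e. an algebra isomorphism satisfying $\widehat\Delta_*\circ\mathcal F_Y=\mathcal F_Y^{\otimes2}\circ\widehat\Delta_{\tilde*}$.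
   Context: $\zeta_N=\exp(2\pi i/N)$, $\mu_N$ the complex $N$-th roots of unity, $\iota:\{1,\dots,N\}\to\mathbb{Z}/N\mathbb{Z}$ the residue-class bijection. $K\langle\langle\mathcal L\rangle\rangle$: noncommutative formal power series over $\mathcal L$; tensor products are completed. Alphabets $X=\{x_0\}\cup\{x_\zeta:\zeta\in\mu_N\}$, $Y=\{y_{k,\zeta}:k\ge1,\zeta\in\mu_N\}$, $\widetilde X=\{\tilde x\}\cup\{\tilde x_\alpha:\alpha\in\mathbb{Z}/N\mathbb{Z}\}$, $\widetilde Y=\{\tilde y_{k,\alpha}:k\ge1,\alpha\in\mathbb{Z}/N\mathbb{Z}\}$, with $y_{k,\zeta}\equiv x_0^{k-1}x_\zeta$ and $\tilde y_{k,\alpha}\equiv\tilde x^{k-1}\tilde x_\alpha$. Coproducts (continuous algebra morphisms): $\widehat\Delta_{sh}$ (resp. $\widehat\Delta_{\tilde{sh}}$) sends each letter $u$ of $X$ (resp. $\widetilde X$) to $u\otimes1+1\otimes u$; $\widehat\Delta_*(y_{k,\zeta})=y_{k,\zeta}\otimes1+1\otimes y_{k,\zeta}+\sum_{k_1+k_2=k,\,k_i\ge1,\,\zeta_1\zeta_2=\zeta}y_{k_1,\zeta_1}\otimes y_{k_2,\zeta_2}$; $\widehat\Delta_{\tilde*}(\tilde y_{k,\alpha})=\tilde y_{k,\alpha}\otimes1+1\otimes\tilde y_{k,\alpha}+\sum_{k_1+k_2=k,\,k_i\ge1}\tilde y_{k_1,\alpha}\otimes\tilde y_{k_2,\alpha}$.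 $\mathcal F$ is the continuous $\mathbb{Q}(\mu_N)$-algebra isomorphism $\tilde x\mapsto x_0$, $\tilde x_\alpha\mapsto\sum_{m=1}^N\zeta_N^{-m\iota^{-1}(\alpha)}x_{\zeta_N^m}$, and $\mathcal F_Y$ is the algebra isomorphism $\tilde y_{k,\alpha}\mapsto\sum_{m=1}^N\zeta_N^{-m\iota^{-1}(\alpha)}y_{k,\zeta_N^m}$. *)

theory Defs
  imports Complex_Main
begin

definition zeta :: "nat \<Rightarrow> complex" where
  "zeta N = exp (2 * pi * \<i> / of_nat N)"

definition mu :: "nat \<Rightarrow> complex set" where
  "mu N = {z. z ^ N = 1}"

definition is_subfield :: "complex set \<Rightarrow> bool" where
  "is_subfield F \<longleftrightarrow> 0 \<in> F \<and> 1 \<in> F \<and>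
     (\<forall>x\<in>F. \<forall>y\<in>F. x + y \<in> F \<and> x * y \<in> F) \<and>
     (\<forall>x\<in>F. - x \<in> F) \<and> (\<forall>x\<in>F. x \<noteq> 0 \<longrightarrow> inverse x \<in> F)"

definition QmuN :: "nat \<Rightarrow> complex set" where
  "QmuN N = \<Inter> {F. is_subfield F \<and> mu N \<subseteq> F}"

text \<open>iota^{-1}: residue classes mod N represented by 0..N-1 are sent to their
  representative in {1..N}.\<close>
definition iota_inv :: "nat \<Rightarrow> nat \<Rightarrow> nat" where
  "iota_inv N a = (if a = 0 then N else a)"

type_synonym 'a ser = "'a list \<Rightarrow> complex"
type_synonym 'a tser = "'a list \<times> 'a list \<Rightarrow> complex"

definition ser :: "complex set \<Rightarrow> 'a set \<Rightarrow> 'a ser set" where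
  "ser K A = {S. \<forall>w. S w \<in> K \<and> (S w \<noteq> 0 \<longrightarrow> w \<in> lists A)}"

definition sadd :: "'a ser \<Rightarrow> 'a ser \<Rightarrow> 'a ser" where
  "sadd S T = (\<lambda>w. S w + T w)"

definition scal :: "complex \<Rightarrow> 'a ser \<Rightarrow> 'a ser" where
  "scal c S = (\<lambda>w. c * S w)"

definition smul :: "'a ser \<Rightarrow> 'a ser \<Rightarrow> 'a ser" where
  "smul S T = (\<lambda>w. \<Sum>i\<le>length w. S (take i w) * T (drop i w))"

definition sone :: "'a ser" where
  "sone = (\<lambda>w. if w = [] then 1 else 0)"

definition sletter :: "'a \<Rightarrow> 'a ser" where
  "sletter x = (\<lambda>w. if w = [x] then 1 else 0)"

definition tmul :: "'a tser \<Rightarrow> 'a tser \<Rightarrow> 'a tser" where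
  "tmul T U = (\<lambda>(u, v). \<Sum>i\<le>length u. \<Sum>j\<le>length v.
      T (take i u, take j v) * U (drop i u, drop j v))"

definition tone :: "'a tser" where
  "tone = (\<lambda>(u, v). if u = [] \<and> v = [] then 1 else 0)"

definition etens :: "'a list \<Rightarrow> 'a list \<Rightarrow> 'a tser" where
  "etens p q = (\<lambda>(u, v). if u = p \<and> v = q then 1 else 0)"

definition prim :: "'a \<Rightarrow> 'a tser" where
  "prim x = (\<lambda>t. etens [x] [] t + etens [] [x] t)"

definition wimg :: "('a \<Rightarrow> 'b ser) \<Rightarrow> 'a list \<Rightarrow> 'b ser" where
  "wimg phi w = foldr (\<lambda>a acc. smul (phi a) acc) w sone"

text \<open>Continuous extension to series over the alphabet A (the sums are finite
  in all cases used below).\<close>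
definition ext :: "'a set \<Rightarrow> ('a \<Rightarrow> 'b ser) \<Rightarrow> 'a ser \<Rightarrow> 'b ser" where
  "ext A phi S = (\<lambda>w. \<Sum>v\<in>{v. v \<in> lists A \<and> wimg phi v w \<noteq> 0}. S v * wimg phi v w)"

definition twimg :: "('a \<Rightarrow> 'a tser) \<Rightarrow> 'a list \<Rightarrow> 'a tser" where
  "twimg psi w = foldr (\<lambda>a acc. tmul (psi a) acc) w tone"

definition tens_ext :: "'a set \<Rightarrow> ('a \<Rightarrow> 'a tser) \<Rightarrow> 'a ser \<Rightarrow> 'a tser" where
  "tens_ext A psi S = (\<lambda>p. \<Sum>v\<in>{v. v \<in> lists A \<and> twimg psi v p \<noteq> 0}. S v * twimg psi v p)"

definition tmap :: "'a set \<Rightarrow> ('a \<Rightarrow> 'b ser) \<Rightarrow> 'a tser \<Rightarrow> 'b tser" where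
  "tmap A phi T = (\<lambda>(u, v). \<Sum>p\<in>{(u', v'). u' \<in> lists A \<and> v' \<in> lists A \<and>
        wimg phi u' u \<noteq> 0 \<and> wimg phi v' v \<noteq> 0}.
        T p * wimg phi (fst p) u * wimg phi (snd p) v)"

definition alg_iso :: "complex set \<Rightarrow> 'a set \<Rightarrow> 'b set \<Rightarrow> ('a ser \<Rightarrow> 'b ser) \<Rightarrow> bool" where
  "alg_iso K A B f \<longleftrightarrow> bij_betw f (ser K A) (ser K B) \<and>
     (\<forall>S\<in>ser K A. \<forall>T\<in>ser K A. f (sadd S T) = sadd (f S) (f T) \<and> f (smul S T) = smul (f S) (f T)) \<and>
     (\<forall>c\<in>K. \<forall>S\<in>ser K A. f (scal c S) = scal c (f S)) \<and>
     f sone = sone"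

datatype xl = X0 | XZ complex
datatype xtl = XT | XTA nat
datatype yl = YL nat complex
datatype ytl = YTL nat nat

definition alphX :: "nat \<Rightarrow> xl set" where
  "alphX N = insert X0 (XZ ` mu N)"
definition alphXt :: "nat \<Rightarrow> xtl set" where
  "alphXt N = insert XT (XTA ` {..<N})"
definition alphY :: "nat \<Rightarrow> yl set" where
  "alphY N = {YL k z | k z. 1 \<le> k \<and> z \<in> mu N}"
definition alphYt :: "nat \<Rightarrow> ytl set" where
  "alphYt N = {YTL k a | k a. 1 \<le> k \<and> a < N}"

definition Dsh :: "nat \<Rightarrow> xl ser \<Rightarrow> xl tser" where
  "Dsh N = tens_ext (alphX N) prim"
definition Dsht :: "nat \<Rightarrow> xtl ser \<Rightarrow> xtl tser" where
  "Dsht N = tens_ext (alphXt N) prim"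

definition Dst_letter :: "nat \<Rightarrow> yl \<Rightarrow> yl tser" where
  "Dst_letter N y = (case y of YL k z \<Rightarrow>
     (\<lambda>t. prim (YL k z) t +
        (\<Sum>q\<in>{(k1, z1, k2, z2). 1 \<le> k1 \<and> 1 \<le> k2 \<and> k1 + k2 = k \<and>
              z1 \<in> mu N \<and> z2 \<in> mu N \<and> z1 * z2 = z}.
           etens [YL (fst q) (fst (snd q))] [YL (fst (snd (snd q))) (snd (snd (snd q)))] t)))"
definition Dst :: "nat \<Rightarrow> yl ser \<Rightarrow> yl tser" where
  "Dst N = tens_ext (alphY N) (Dst_letter N)"

definition Dstt_letter :: "ytl \<Rightarrow> ytl tser" where
  "Dstt_letter y = (case y of YTL k a \<Rightarrow>
     (\<lambda>t. prim (YTL k a) t +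
        (\<Sum>k1\<in>{1..<k}. etens [YTL k1 a] [YTL (k - k1) a] t)))"
definition Dstt :: "nat \<Rightarrow> ytl ser \<Rightarrow> ytl tser" where
  "Dstt N = tens_ext (alphYt N) Dstt_letter"

definition F_letter :: "nat \<Rightarrow> xtl \<Rightarrow> xl ser" where
  "F_letter N x = (case x of XT \<Rightarrow> sletter X0
     | XTA a \<Rightarrow> (\<lambda>w. \<Sum>m=1..N. zeta N powi (- int (m * iota_inv N a)) * sletter (XZ (zeta N ^ m)) w))"
definition FX :: "nat \<Rightarrow> xtl ser \<Rightarrow> xl ser" where
  "FX N = ext (alphXt N) (F_letter N)"

definition FY_letter :: "nat \<Rightarrow> ytl \<Rightarrow> yl ser" where
  "FY_letter N y = (case y of YTL k a \<Rightarrow>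
     (\<lambda>w. \<Sum>m=1..N. zeta N powi (- int (m * iota_inv N a)) * sletter (YL k (zeta N ^ m)) w))"
definition FY :: "nat \<Rightarrow> ytl ser \<Rightarrow> yl ser" where
  "FY N = ext (alphYt N) (FY_letter N)"

end

theory Submission
  imports Defs
begin

fun Fw :: "('a \<Rightarrow> 'b \<Rightarrow> complex) \<Rightarrow> 'a list \<Rightarrow> 'b list \<Rightarrow> complex" where
  "Fw M [] [] = 1"
| "Fw M (a # v) (b # x) = M a b * Fw M v x"
| "Fw M [] (b # x) = 0"
| "Fw M (a # v) [] = 0"

lemma Fw_len: "Fw M v x \<noteq> 0 \<Longrightarrow> length v = length x"
  by (induction M v x rule: Fw.induct) auto

lemma Fw_split: "length v = length x \<Longrightarrow>
   Fw M v x = Fw M (take i v) (take i x) * Fw M (drop i v) (drop i x)"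
proof (induction v arbitrary: x i)
  case Nil then show ?case by simp
next
  case (Cons a v)
  then obtain b x' where x: "x = b # x'" by (cases x) auto
  show ?case using Cons x by (cases i) auto
qed

lemma Fw_append: "length v1 = length x1 \<Longrightarrow> Fw M (v1 @ v2) (x1 @ x2) = Fw M v1 x1 * Fw M v2 x2"
proof (induction v1 arbitrary: x1)
  case Nil then show ?case by simp
next
  case (Cons a v)
  then obtain b x' where x: "x1 = b # x'" by (cases x1) auto
  show ?case using Cons x by auto
qed

lemma sum_swap_rel:
  assumes "finite X" "\<And>x. x \<in> X \<Longrightarrow> finite (Y x)" "finite V" "\<And>v. v \<in> V \<Longrightarrow> finite (Z v)"
    and "\<And>x v. f x v \<noteq> 0 \<Longrightarrow> (x \<in> X \<and> v \<in> Y x) = (v \<in> V \<and> x \<in> Z v)"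
  shows "(\<Sum>x\<in>X. \<Sum>v\<in>Y x. f x v) = (\<Sum>v\<in>V. \<Sum>x\<in>Z v. f x v)"
proof -
  let ?R = "{(x, v). f x v \<noteq> 0 \<and> x \<in> X \<and> v \<in> Y x}"
  have fs1: "finite (Sigma X Y)" using assms by auto
  have fs2: "finite (Sigma V Z)" using assms by auto
  have "(\<Sum>x\<in>X. \<Sum>v\<in>Y x. f x v) = (\<Sum>(x,v)\<in>Sigma X Y. f x v)"
    by (rule sum.Sigma) (use assms in auto)
  also have "\<dots> = (\<Sum>(x,v)\<in>?R. f x v)"
    by (rule sum.mono_neutral_right[OF fs1]) auto
  also have "\<dots> = (\<Sum>(v,x)\<in>(\<lambda>(x,v). (v,x)) ` ?R. f x v)"
    by (subst sum.reindex) (auto simp: inj_on_def intro!: sum.cong)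
  also have "(\<lambda>(x,v). (v,x)) ` ?R = {(v, x). f x v \<noteq> 0 \<and> v \<in> V \<and> x \<in> Z v}"
  proof
    show "(\<lambda>(x,v). (v,x)) ` ?R \<subseteq> {(v, x). f x v \<noteq> 0 \<and> v \<in> V \<and> x \<in> Z v}"
      using assms(5) by auto
    show "{(v, x). f x v \<noteq> 0 \<and> v \<in> V \<and> x \<in> Z v} \<subseteq> (\<lambda>(x,v). (v,x)) ` ?R"
    proof clarify
      fix v x assume h: "f x v \<noteq> 0" "v \<in> V" "x \<in> Z v"
      then have "(x, v) \<in> ?R" using assms(5)[OF h(1)] by auto
      then show "(v, x) \<in> (\<lambda>(x,v). (v,x)) ` ?R" by force
    qed
  qed
  also have "(\<Sum>(v,x)\<in>\<dots>. f x v) = (\<Sum>(v,x)\<in>Sigma V Z. f x v)"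
    by (rule sum.mono_neutral_left[OF fs2]) auto
  also have "\<dots> = (\<Sum>v\<in>V. \<Sum>x\<in>Z v. f x v)"
    by (rule sum.Sigma[symmetric]) (use assms in auto)
  finally show ?thesis .
qed

definition Ew :: "'a set \<Rightarrow> ('a \<Rightarrow> 'b \<Rightarrow> complex) \<Rightarrow> 'a ser \<Rightarrow> 'b ser" where
  "Ew A M S = (\<lambda>w. \<Sum>v\<in>{v. v \<in> lists A \<and> Fw M v w \<noteq> 0}. S v * Fw M v w)"

definition tFw :: "'a set \<Rightarrow> ('a \<Rightarrow> 'b \<Rightarrow> complex) \<Rightarrow> 'a tser \<Rightarrow> 'b tser" where
  "tFw A M T = (\<lambda>(u, v). \<Sum>p\<in>{(u', v'). u' \<in> lists A \<and> v' \<in> lists A \<and>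
        Fw M u' u \<noteq> 0 \<and> Fw M v' v \<noteq> 0}. T p * Fw M (fst p) u * Fw M (snd p) v)"

definition PP :: "'a set \<Rightarrow> ('a \<Rightarrow> 'b \<Rightarrow> complex) \<Rightarrow> 'b list \<Rightarrow> 'a list set" where
  "PP A M x = {v. v \<in> lists A \<and> Fw M v x \<noteq> 0}"

definition FF :: "'b set \<Rightarrow> ('a \<Rightarrow> 'b \<Rightarrow> complex) \<Rightarrow> 'a list \<Rightarrow> 'b list set" where
  "FF B M v = {x. x \<in> lists B \<and> Fw M v x \<noteq> 0}"

locale lin =
  fixes A :: "'a set" and B :: "'b set" and M :: "'a \<Rightarrow> 'b \<Rightarrow> complex"
  assumes supp: "a \<in> A \<Longrightarrow> M a b \<noteq> 0 \<Longrightarrow> b \<in> B"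
    and finpre: "finite {a. a \<in> A \<and> M a b \<noteq> 0}"
    and finpost: "a \<in> A \<Longrightarrow> finite {b. M a b \<noteq> 0}"
begin

abbreviation "P \<equiv> PP A M"
abbreviation "Fi \<equiv> FF B M"
abbreviation "E \<equiv> Ew A M"
abbreviation "tF \<equiv> tFw A M"

lemma P_Nil: "P [] = {[]}"
proof -
  have "Fw M v [] \<noteq> 0 \<longleftrightarrow> v = []" for v by (cases v) auto
  then show ?thesis by (auto simp: PP_def)
qed

lemma P_Cons: "P (b # x) = (\<lambda>(a, v). a # v) ` ({a. a \<in> A \<and> M a b \<noteq> 0} \<times> P x)"
proof -
  have "v \<in> P (b # x) \<longleftrightarrow> (\<exists>a v'. v = a # v' \<and> a \<in> A \<and> M a b \<noteq> 0 \<and> v' \<in> P x)" for v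
    by (cases v) (auto simp: PP_def)
  then show ?thesis by auto
qed

lemma finite_P: "finite (P x)"
proof (induction x)
  case Nil then show ?case by (simp add: P_Nil)
next
  case (Cons b x) then show ?case by (simp add: P_Cons finpre)
qed

lemma Fi_Cons: "Fi (a # v) = (\<lambda>(b, x). b # x) ` ({b. b \<in> B \<and> M a b \<noteq> 0} \<times> Fi v)"
proof -
  have "x \<in> Fi (a # v) \<longleftrightarrow> (\<exists>b x'. x = b # x' \<and> b \<in> B \<and> M a b \<noteq> 0 \<and> x' \<in> Fi v)" for x
    by (cases x) (auto simp: FF_def)
  then show ?thesis by auto
qed

lemma Fi_Nil: "Fi [] = {[]}"
proof -
  have "Fw M [] x \<noteq> 0 \<longleftrightarrow> x = []" for x by (cases x) auto
  then show ?thesis by (auto simp: FF_def)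
qed

lemma finite_Fi: "v \<in> lists A \<Longrightarrow> finite (Fi v)"
proof (induction v)
  case Nil then show ?case by (simp add: Fi_Nil)
next
  case (Cons a v)
  have "finite {b. b \<in> B \<and> M a b \<noteq> 0}"
    using finpost[of a] Cons.prems by (auto intro: finite_subset)
  then show ?case using Cons by (simp add: Fi_Cons)
qed

lemma Fw_lists: "v \<in> lists A \<Longrightarrow> Fw M v x \<noteq> 0 \<Longrightarrow> x \<in> lists B"
proof (induction v arbitrary: x)
  case Nil then show ?case by (cases x) auto
next
  case (Cons a v)
  obtain b x' where x: "x = b # x'" using Cons.prems by (cases x) auto
  have "M a b \<noteq> 0" "Fw M v x' \<noteq> 0" using Cons.prems x by auto
  then show ?case using Cons x by (auto intro: supp)
qed

lemma E_def': "E S x = (\<Sum>v\<in>P x. S v * Fw M v x)"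
  by (simp add: Ew_def PP_def)

lemma split_sum:
  assumes "i \<le> length x"
  shows "(\<Sum>v\<in>P x. f (take i v) (drop i v)) = (\<Sum>v1\<in>P (take i x). \<Sum>v2\<in>P (drop i x). f v1 v2)"
proof -
  have "(\<Sum>v1\<in>P (take i x). \<Sum>v2\<in>P (drop i x). f v1 v2) = (\<Sum>(v1,v2)\<in>P (take i x) \<times> P (drop i x). f v1 v2)"
    by (rule sum.cartesian_product)
  also have "\<dots> = (\<Sum>v\<in>P x. f (take i v) (drop i v))"
  proof (rule sum.reindex_bij_witness[where i = "\<lambda>v. (take i v, drop i v)" and j = "\<lambda>(v1, v2). v1 @ v2"])
    fix v assume v: "v \<in> P x"
    then have l: "length v = length x" and nz: "Fw M v x \<noteq> 0" and vA: "v \<in> lists A"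
      using Fw_len by (auto simp: PP_def)
    show "(case (take i v, drop i v) of (v1, v2) \<Rightarrow> v1 @ v2) = v" by simp
    have "Fw M (take i v) (take i x) \<noteq> 0 \<and> Fw M (drop i v) (drop i x) \<noteq> 0"
      using nz Fw_split[OF l, of M i] by auto
    then show "(take i v, drop i v) \<in> P (take i x) \<times> P (drop i x)"
      using vA by (auto simp: PP_def dest: in_set_takeD in_set_dropD)
  next
    fix p assume p: "p \<in> P (take i x) \<times> P (drop i x)"
    obtain v1 v2 where pv: "p = (v1, v2)" by (cases p)
    have h: "v1 \<in> lists A" "v2 \<in> lists A" "Fw M v1 (take i x) \<noteq> 0" "Fw M v2 (drop i x) \<noteq> 0"
      using p pv by (auto simp: PP_def)
    have l1: "length v1 = i" using Fw_len[OF h(3)] assms by simp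
    show "(take i (case p of (v1, v2) \<Rightarrow> v1 @ v2), drop i (case p of (v1, v2) \<Rightarrow> v1 @ v2)) = p"
      using pv l1 by simp
    have "Fw M (v1 @ v2) x = Fw M v1 (take i x) * Fw M v2 (drop i x)"
      using Fw_append[of v1 "take i x" M v2 "drop i x"] l1 assms by simp
    then show "(case p of (v1, v2) \<Rightarrow> v1 @ v2) \<in> P x"
      using h pv by (auto simp: PP_def)
  next
    fix p assume p: "p \<in> P (take i x) \<times> P (drop i x)"
    obtain v1 v2 where pv: "p = (v1, v2)" by (cases p)
    have "Fw M v1 (take i x) \<noteq> 0" using p pv by (auto simp: PP_def)
    then have l1: "length v1 = i" using Fw_len assms by fastforce
    show "f (take i (case p of (v1, v2) \<Rightarrow> v1 @ v2)) (drop i (case p of (v1, v2) \<Rightarrow> v1 @ v2)) = (case p of (v1, v2) \<Rightarrow> f v1 v2)"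
      using pv l1 by simp
  qed
  finally show ?thesis by simp
qed

lemma E_mult: "E (smul S T) = smul (E S) (E T)"
proof
  fix x
  have "E (smul S T) x = (\<Sum>v\<in>P x. \<Sum>i\<le>length x.
      (S (take i v) * Fw M (take i v) (take i x)) * (T (drop i v) * Fw M (drop i v) (drop i x)))"
    unfolding E_def'
  proof (rule sum.cong[OF refl])
    fix v assume v: "v \<in> P x"
    then have l: "length v = length x" using Fw_len by (auto simp: PP_def)
    show "smul S T v * Fw M v x = (\<Sum>i\<le>length x.
      (S (take i v) * Fw M (take i v) (take i x)) * (T (drop i v) * Fw M (drop i v) (drop i x)))"
      unfolding smul_def l sum_distrib_right
    proof (rule sum.cong[OF refl])
      fix i show "S (take i v) * T (drop i v) * Fw M v x =
         S (take i v) * Fw M (take i v) (take i x) * (T (drop i v) * Fw M (drop i v) (drop i x))"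
        using Fw_split[OF l, of M i] by (simp add: algebra_simps)
    qed
  qed
  also have "\<dots> = (\<Sum>i\<le>length x. \<Sum>v\<in>P x.
      (S (take i v) * Fw M (take i v) (take i x)) * (T (drop i v) * Fw M (drop i v) (drop i x)))"
    by (rule sum.swap)
  also have "\<dots> = (\<Sum>i\<le>length x. \<Sum>v1\<in>P (take i x). \<Sum>v2\<in>P (drop i x).
      (S v1 * Fw M v1 (take i x)) * (T v2 * Fw M v2 (drop i x)))"
    by (rule sum.cong[OF refl], rule split_sum) simp
  also have "\<dots> = smul (E S) (E T) x"
    unfolding smul_def E_def' by (simp add: sum_product)
  finally show "E (smul S T) x = smul (E S) (E T) x" .
qed

lemma E_add: "E (sadd S T) = sadd (E S) (E T)"
  by (auto simp: E_def' sadd_def sum.distrib algebra_simps)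

lemma E_scal: "E (scal c S) = scal c (E S)"
  by (auto simp: E_def' scal_def sum_distrib_left algebra_simps)

lemma E_one: "E sone = sone"
proof
  fix x
  have "E sone x = (\<Sum>v\<in>P x. (if v = [] then Fw M [] x else 0))"
    unfolding E_def' sone_def by (rule sum.cong) auto
  also have "\<dots> = (if [] \<in> P x then Fw M [] x else 0)"
    by (simp add: sum.delta[OF finite_P])
  also have "\<dots> = sone x"
    by (cases x) (auto simp: sone_def PP_def)
  finally show "E sone x = sone x" .
qed

lemma E_supp: "E S x \<noteq> 0 \<Longrightarrow> x \<in> lists B"
proof -
  assume "E S x \<noteq> 0"
  then obtain v where "v \<in> P x" "S v * Fw M v x \<noteq> 0"
    unfolding E_def' by (meson sum.not_neutral_contains_not_neutral)
  then show ?thesis using Fw_lists by (auto simp: PP_def)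
qed

end

lemma sum_swap4:
  "(\<Sum>x\<in>X. \<Sum>y\<in>Y. \<Sum>i\<in>I. \<Sum>j\<in>J. h x y i j) = (\<Sum>i\<in>I. \<Sum>j\<in>J. \<Sum>x\<in>X. \<Sum>y\<in>Y. h x y i j)"
proof -
  have "(\<Sum>x\<in>X. \<Sum>y\<in>Y. \<Sum>i\<in>I. \<Sum>j\<in>J. h x y i j) = (\<Sum>x\<in>X. \<Sum>i\<in>I. \<Sum>y\<in>Y. \<Sum>j\<in>J. h x y i j)"
    by (rule sum.cong[OF refl], rule sum.swap)
  also have "\<dots> = (\<Sum>i\<in>I. \<Sum>x\<in>X. \<Sum>y\<in>Y. \<Sum>j\<in>J. h x y i j)"
    by (rule sum.swap)
  also have "\<dots> = (\<Sum>i\<in>I. \<Sum>x\<in>X. \<Sum>j\<in>J. \<Sum>y\<in>Y. h x y i j)"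
    by (rule sum.cong[OF refl], rule sum.cong[OF refl], rule sum.swap)
  also have "\<dots> = (\<Sum>i\<in>I. \<Sum>j\<in>J. \<Sum>x\<in>X. \<Sum>y\<in>Y. h x y i j)"
    by (rule sum.cong[OF refl], rule sum.swap)
  finally show ?thesis .
qed

context lin begin

lemma tF_alt: "tF T (u, w) = (\<Sum>u'\<in>P u. \<Sum>w'\<in>P w. T (u', w') * Fw M u' u * Fw M w' w)"
proof -
  have "{(u', v'). u' \<in> lists A \<and> v' \<in> lists A \<and> Fw M u' u \<noteq> 0 \<and> Fw M v' w \<noteq> 0} = P u \<times> P w"
    by (auto simp: PP_def)
  then show ?thesis
    by (auto simp: tFw_def sum.cartesian_product intro!: sum.cong)
qed

lemma tF_mult: "tF (tmul T U) = tmul (tF T) (tF U)"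
proof (rule ext, clarify)
  fix u w
  define g where "g i j u1 u2 w1 w2 =
     (T (u1, w1) * Fw M u1 (take i u) * Fw M w1 (take j w)) *
     (U (u2, w2) * Fw M u2 (drop i u) * Fw M w2 (drop j w))" for i j u1 u2 w1 w2
  have "tF (tmul T U) (u, w) = (\<Sum>u'\<in>P u. \<Sum>w'\<in>P w. \<Sum>i\<le>length u. \<Sum>j\<le>length w.
           g i j (take i u') (drop i u') (take j w') (drop j w'))"
    unfolding tF_alt
  proof (intro sum.cong refl)
    fix u' w' assume u': "u' \<in> P u" and w': "w' \<in> P w"
    have lu: "length u' = length u" and lw: "length w' = length w"
      using u' w' Fw_len by (auto simp: PP_def)
    show "tmul T U (u', w') * Fw M u' u * Fw M w' w = (\<Sum>i\<le>length u. \<Sum>j\<le>length w.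
           g i j (take i u') (drop i u') (take j w') (drop j w'))"
      unfolding tmul_def lu lw split sum_distrib_right
    proof (intro sum.cong refl)
      fix i j
      show "T (take i u', take j w') * U (drop i u', drop j w') * Fw M u' u * Fw M w' w =
            g i j (take i u') (drop i u') (take j w') (drop j w')"
        unfolding g_def using Fw_split[OF lu, of M i] Fw_split[OF lw, of M j]
        by (simp add: algebra_simps)
    qed
  qed
  also have "\<dots> = (\<Sum>i\<le>length u. \<Sum>j\<le>length w. \<Sum>u'\<in>P u. \<Sum>w'\<in>P w.
           g i j (take i u') (drop i u') (take j w') (drop j w'))"
    by (rule sum_swap4)
  also have "\<dots> = (\<Sum>i\<le>length u. \<Sum>j\<le>length w. tF T (take i u, take j w) * tF U (drop i u, drop j w))"
  proof (intro sum.cong refl)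
    fix i j assume i: "i \<in> {..length u}" and j: "j \<in> {..length w}"
    have "(\<Sum>u'\<in>P u. \<Sum>w'\<in>P w. g i j (take i u') (drop i u') (take j w') (drop j w')) =
          (\<Sum>u'\<in>P u. \<Sum>w1\<in>P (take j w). \<Sum>w2\<in>P (drop j w). g i j (take i u') (drop i u') w1 w2)"
      by (rule sum.cong[OF refl], rule split_sum) (use j in simp)
    also have "\<dots> = (\<Sum>u1\<in>P (take i u). \<Sum>u2\<in>P (drop i u). \<Sum>w1\<in>P (take j w). \<Sum>w2\<in>P (drop j w). g i j u1 u2 w1 w2)"
      by (rule split_sum[where f = "\<lambda>a b. \<Sum>w1\<in>P (take j w). \<Sum>w2\<in>P (drop j w). g i j a b w1 w2"]) (use i in simp)
    also have "\<dots> = tF T (take i u, take j w) * tF U (drop i u, drop j w)"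
      unfolding tF_alt sum_product g_def by simp
    finally show "(\<Sum>u'\<in>P u. \<Sum>w'\<in>P w. g i j (take i u') (drop i u') (take j w') (drop j w')) =
          tF T (take i u, take j w) * tF U (drop i u, drop j w)" .
  qed
  also have "\<dots> = tmul (tF T) (tF U) (u, w)"
    by (simp add: tmul_def)
  finally show "tF (tmul T U) (u, w) = tmul (tF T) (tF U) (u, w)" .
qed

lemma tF_etens: "tF (etens s t) (u, w) = (if s \<in> lists A \<and> t \<in> lists A then Fw M s u * Fw M t w else 0)"
proof -
  have "tF (etens s t) (u, w) = (\<Sum>u'\<in>P u. (if u' = s then Fw M u' u else 0)) * (\<Sum>w'\<in>P w. (if w' = t then Fw M w' w else 0))"
    unfolding tF_alt sum_product by (intro sum.cong refl) (auto simp: etens_def)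
  also have "\<dots> = (if s \<in> P u then Fw M s u else 0) * (if t \<in> P w then Fw M t w else 0)"
    by (simp add: sum.delta[OF finite_P])
  also have "\<dots> = (if s \<in> lists A \<and> t \<in> lists A then Fw M s u * Fw M t w else 0)"
    by (auto simp: PP_def)
  finally show ?thesis .
qed

lemma tF_tone: "tF tone = tone"
proof (rule ext, clarify)
  fix u w
  have "(tone :: 'a tser) = etens [] []" by (auto simp: tone_def etens_def)
  then have "tF tone (u, w) = tF (etens [] []) (u, w)" by simp
  also have "\<dots> = Fw M [] u * Fw M [] w" by (simp only: tF_etens) simp
  also have "\<dots> = tone (u, w)" by (cases u; cases w) (auto simp: tone_def)
  finally show "tF tone (u, w) = tone (u, w)" .
qed

lemma tF_sum: "finite I \<Longrightarrow> tF (\<lambda>p. \<Sum>i\<in>I. f i p) q = (\<Sum>i\<in>I. tF (f i) q)"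
proof -
  assume fin: "finite I"
  obtain u w where q: "q = (u, w)" by (cases q)
  show ?thesis unfolding q tF_alt sum_distrib_right
    by (subst sum.swap, rule sum.cong[OF refl], rule sum.swap)
qed

lemma tF_add: "tF (\<lambda>p. T p + U p) q = tF T q + tF U q"
proof -
  obtain u w where q: "q = (u, w)" by (cases q)
  show ?thesis unfolding q tF_alt by (simp add: sum.distrib algebra_simps)
qed

lemma tF_scale: "tF (\<lambda>p. c * T p) q = c * tF T q"
proof -
  obtain u w where q: "q = (u, w)" by (cases q)
  show ?thesis unfolding q tF_alt by (simp add: sum_distrib_left algebra_simps)
qed

end

lemma sum_cons_image:
  "finite Bs \<Longrightarrow> finite Xs \<Longrightarrow>
   (\<Sum>x\<in>(\<lambda>(b, x). b # x) ` (Bs \<times> Xs). f x) = (\<Sum>b\<in>Bs. \<Sum>x\<in>Xs. f (b # x))"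
proof -
  have "inj_on (\<lambda>(b, x). b # x) (Bs \<times> Xs)" by (auto simp: inj_on_def)
  then show ?thesis by (simp add: sum.reindex sum.cartesian_product split_def)
qed

locale lin_inv = L1: lin A B M + L2: lin B A M'
  for A :: "'a set" and B :: "'b set" and M :: "'a \<Rightarrow> 'b \<Rightarrow> complex" and M' +
  assumes inv1: "a \<in> A \<Longrightarrow> c \<in> A \<Longrightarrow>
      (\<Sum>b\<in>{b. b \<in> B \<and> M a b \<noteq> 0}. M a b * M' b c) = (if a = c then 1 else 0)"
    and inv2: "b \<in> B \<Longrightarrow> d \<in> B \<Longrightarrow>
      (\<Sum>a\<in>{a. a \<in> A \<and> M' b a \<noteq> 0}. M' b a * M a d) = (if b = d then 1 else 0)"
begin

lemma swap: "lin_inv B A M' M"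
  by unfold_locales (assumption | rule L2.supp L1.supp L2.finpre L1.finpre L2.finpost L1.finpost inv2 inv1)+

lemma word_inv: "v \<in> lists A \<Longrightarrow> u \<in> lists A \<Longrightarrow>
    (\<Sum>x\<in>FF B M v. Fw M v x * Fw M' x u) = (if v = u then 1 else 0)"
proof (induction v arbitrary: u)
  case Nil
  then show ?case using L1.Fi_Nil by (cases u) auto
next
  case (Cons a v)
  note IH = Cons.IH and prems = Cons.prems
  have fpost: "finite {b. b \<in> B \<and> M a b \<noteq> 0}"
    using L1.finpost[of a] Cons.prems by (auto intro: finite_subset)
  have fF: "finite (FF B M v)" using Cons.prems L1.finite_Fi by auto
  have "(\<Sum>x\<in>FF B M (a # v). Fw M (a # v) x * Fw M' x u) =
        (\<Sum>b\<in>{b. b \<in> B \<and> M a b \<noteq> 0}. \<Sum>x\<in>FF B M v. M a b * Fw M v x * Fw M' (b # x) u)"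
    unfolding L1.Fi_Cons by (simp add: sum_cons_image[OF fpost fF] mult.assoc)
  also have "\<dots> = (if a # v = u then 1 else 0)"
  proof (cases u)
    case Nil then show ?thesis by simp
  next
    case (Cons c u')
    note Cons2 = Cons
    have "(\<Sum>b\<in>{b. b \<in> B \<and> M a b \<noteq> 0}. \<Sum>x\<in>FF B M v. M a b * Fw M v x * Fw M' (b # x) u)
        = (\<Sum>b\<in>{b. b \<in> B \<and> M a b \<noteq> 0}. M a b * M' b c * (\<Sum>x\<in>FF B M v. Fw M v x * Fw M' x u'))"
      unfolding Cons2 by (simp add: sum_distrib_left algebra_simps)
    also have "\<dots> = (\<Sum>b\<in>{b. b \<in> B \<and> M a b \<noteq> 0}. M a b * M' b c) * (if v = u' then 1 else 0)"
      using IH[of u'] prems Cons2 by (simp add: sum_distrib_right)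
    also have "\<dots> = (if a # v = u then 1 else 0)"
      using inv1[of a c] prems Cons2 by simp
    finally show ?thesis .
  qed
  finally show ?case .
qed

lemma left_inv:
  assumes S: "\<And>w. S w \<noteq> 0 \<Longrightarrow> w \<in> lists A"
  shows "Ew B M' (Ew A M S) = S"
proof
  fix u
  show "Ew B M' (Ew A M S) u = S u"
  proof (cases "u \<in> lists A")
    case False
    have "Ew B M' (Ew A M S) u = 0" using L2.E_supp False by blast
    then show ?thesis using S False by fastforce
  next
    case uA: True
    let ?V = "(\<Union>x\<in>PP B M' u. PP A M x) \<union> {u}"
    have finV: "finite ?V" using L1.finite_P L2.finite_P by auto
    have "Ew B M' (Ew A M S) u = (\<Sum>x\<in>PP B M' u. \<Sum>v\<in>PP A M x. S v * Fw M v x * Fw M' x u)"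
      unfolding L2.E_def' L1.E_def' by (simp add: sum_distrib_right)
    also have "\<dots> = (\<Sum>v\<in>?V. \<Sum>x\<in>FF B M v. S v * Fw M v x * Fw M' x u)"
    proof (rule sum_swap_rel)
      show "finite (PP B M' u)" by (rule L2.finite_P)
      show "finite (PP A M x)" for x by (rule L1.finite_P)
      show "finite ?V" by (rule finV)
      show "finite (FF B M v)" if "v \<in> ?V" for v
        using that L1.finite_Fi uA by (auto simp: PP_def)
      fix x v assume nz: "S v * Fw M v x * Fw M' x u \<noteq> 0"
      then have "v \<in> lists A" "Fw M v x \<noteq> 0" "Fw M' x u \<noteq> 0" using S by auto
      moreover then have "x \<in> lists B" using L1.Fw_lists by blast
      ultimately show "(x \<in> PP B M' u \<and> v \<in> PP A M x) = (v \<in> ?V \<and> x \<in> FF B M v)"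
        by (auto simp: PP_def FF_def)
    qed
    also have "\<dots> = (\<Sum>v\<in>?V. if v = u then S v else 0)"
    proof (rule sum.cong[OF refl])
      fix v assume "v \<in> ?V"
      show "(\<Sum>x\<in>FF B M v. S v * Fw M v x * Fw M' x u) = (if v = u then S v else 0)"
      proof (cases "S v = 0")
        case True then show ?thesis by auto
      next
        case False
        then have "v \<in> lists A" using S by auto
        then show ?thesis using word_inv[of v u] uA
          by (simp add: sum_distrib_left[symmetric] mult.assoc)
      qed
    qed
    also have "\<dots> = S u" using finV by (simp add: sum.delta)
    finally show ?thesis .
  qed
qed

end

definition is_K :: "complex set \<Rightarrow> bool" where "is_K K = is_subfield K"

lemma subfield_sum: "is_subfield K \<Longrightarrow> (\<And>i. i \<in> I \<Longrightarrow> f i \<in> K) \<Longrightarrow> sum f I \<in> K"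
proof (induction I rule: infinite_finite_induct)
  case (infinite A) then show ?case by (simp add: is_subfield_def)
next
  case empty then show ?case by (simp add: is_subfield_def)
next
  case (insert x F) then show ?case by (simp add: is_subfield_def)
qed

lemma Fw_K: "is_subfield K \<Longrightarrow> (\<And>a b. a \<in> A \<Longrightarrow> M a b \<in> K) \<Longrightarrow> v \<in> lists A \<Longrightarrow> Fw M v x \<in> K"
proof (induction v arbitrary: x)
  case Nil then show ?case by (cases x) (auto simp: is_subfield_def)
next
  case (Cons a v) then show ?case by (cases x) (auto simp: is_subfield_def)
qed

lemma Ew_K: "is_subfield K \<Longrightarrow> (\<And>a b. a \<in> A \<Longrightarrow> M a b \<in> K) \<Longrightarrow> (\<And>w. S w \<in> K) \<Longrightarrow> Ew A M S x \<in> K"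
  unfolding Ew_def
proof (rule subfield_sum)
  assume K: "is_subfield K" and MK: "\<And>a b. a \<in> A \<Longrightarrow> M a b \<in> K" and SK: "\<And>w. S w \<in> K"
  fix v assume "v \<in> {v \<in> lists A. Fw M v x \<noteq> 0}"
  then have "Fw M v x \<in> K" using Fw_K[of K A M v x] K MK by blast
  then show "S v * Fw M v x \<in> K" using SK[of v] K by (simp add: is_subfield_def)
qed

lemma (in lin_inv) alg_iso_E:
  assumes K: "is_subfield K" and MK: "\<And>a b. a \<in> A \<Longrightarrow> M a b \<in> K"
    and MK': "\<And>a b. a \<in> B \<Longrightarrow> M' a b \<in> K"
  shows "alg_iso K A B (Ew A M)"
proof -
  interpret sw: lin_inv B A M' M by (rule swap)
  have EK: "\<And>S x. (\<And>w. S w \<in> K) \<Longrightarrow> Ew A M S x \<in> K" using Ew_K[of K A M] K MK by blast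
  have EK': "\<And>S x. (\<And>w. S w \<in> K) \<Longrightarrow> Ew B M' S x \<in> K" using Ew_K[of K B M'] K MK' by blast
  have into: "Ew A M S \<in> ser K B" if "S \<in> ser K A" for S
    using that EK L1.E_supp by (auto simp: ser_def)
  have into': "Ew B M' T \<in> ser K A" if "T \<in> ser K B" for T
    using that EK' L2.E_supp by (auto simp: ser_def)
  have bij: "bij_betw (Ew A M) (ser K A) (ser K B)"
  proof (rule bij_betw_byWitness[where f' = "Ew B M'"])
    show "\<forall>a\<in>ser K A. Ew B M' (Ew A M a) = a" by (auto simp: ser_def intro!: left_inv)
    show "\<forall>a'\<in>ser K B. Ew A M (Ew B M' a') = a'" by (auto simp: ser_def intro!: sw.left_inv)
    show "Ew A M ` ser K A \<subseteq> ser K B" using into by auto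
    show "Ew B M' ` ser K B \<subseteq> ser K A" using into' by auto
  qed
  show ?thesis unfolding alg_iso_def
    using bij L1.E_add L1.E_mult L1.E_scal L1.E_one by auto
qed

definition wt :: "('a \<Rightarrow> nat) \<Rightarrow> 'a list \<Rightarrow> nat" where
  "wt g u = sum_list (map g u)"

lemma twimg_Nil[simp]: "twimg D [] = tone" by (simp add: twimg_def)
lemma twimg_Cons[simp]: "twimg D (a # x) = tmul (D a) (twimg D x)" by (simp add: twimg_def)

lemma tmul_sum_left: "finite I \<Longrightarrow> tmul (\<lambda>p. \<Sum>i\<in>I. f i p) U q = (\<Sum>i\<in>I. tmul (f i) U q)"
proof -
  assume "finite I"
  obtain u w where q: "q = (u, w)" by (cases q)
  have "tmul (\<lambda>p. \<Sum>i\<in>I. f i p) U (u, w) = (\<Sum>a\<le>length u. \<Sum>b\<le>length w. \<Sum>i\<in>I.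
       f i (take a u, take b w) * U (drop a u, drop b w))"
    by (simp add: tmul_def sum_distrib_right)
  also have "\<dots> = (\<Sum>a\<le>length u. \<Sum>i\<in>I. \<Sum>b\<le>length w. f i (take a u, take b w) * U (drop a u, drop b w))"
    by (rule sum.cong[OF refl], rule sum.swap)
  also have "\<dots> = (\<Sum>i\<in>I. \<Sum>a\<le>length u. \<Sum>b\<le>length w. f i (take a u, take b w) * U (drop a u, drop b w))"
    by (rule sum.swap)
  finally show ?thesis unfolding q by (simp add: tmul_def)
qed

lemma tmul_sum_right: "finite I \<Longrightarrow> tmul T (\<lambda>p. \<Sum>i\<in>I. f i p) q = (\<Sum>i\<in>I. tmul T (f i) q)"
proof -
  assume "finite I"
  obtain u w where q: "q = (u, w)" by (cases q)
  have "tmul T (\<lambda>p. \<Sum>i\<in>I. f i p) (u, w) = (\<Sum>a\<le>length u. \<Sum>b\<le>length w. \<Sum>i\<in>I.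
       T (take a u, take b w) * f i (drop a u, drop b w))"
    by (simp add: tmul_def sum_distrib_left)
  also have "\<dots> = (\<Sum>a\<le>length u. \<Sum>i\<in>I. \<Sum>b\<le>length w. T (take a u, take b w) * f i (drop a u, drop b w))"
    by (rule sum.cong[OF refl], rule sum.swap)
  also have "\<dots> = (\<Sum>i\<in>I. \<Sum>a\<le>length u. \<Sum>b\<le>length w. T (take a u, take b w) * f i (drop a u, drop b w))"
    by (rule sum.swap)
  finally show ?thesis unfolding q by (simp add: tmul_def)
qed

lemma tmul_scale_left: "tmul (\<lambda>p. c * T p) U q = c * tmul T U q"
proof -
  obtain u w where q: "q = (u, w)" by (cases q)
  show ?thesis unfolding q tmul_def split by (simp add: sum_distrib_left algebra_simps)
qed

lemma tmul_scale_right: "tmul T (\<lambda>p. c * U p) q = c * tmul T U q"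
proof -
  obtain u w where q: "q = (u, w)" by (cases q)
  show ?thesis unfolding q tmul_def split by (simp add: sum_distrib_left algebra_simps)
qed

locale coal =
  fixes A :: "'a set" and D :: "'a \<Rightarrow> 'a tser" and g :: "'a \<Rightarrow> nat"
  assumes gpos: "a \<in> A \<Longrightarrow> 1 \<le> g a"
    and gfin: "finite {a. a \<in> A \<and> g a \<le> n}"
    and Dwt: "a \<in> A \<Longrightarrow> D a (u, w) \<noteq> 0 \<Longrightarrow> wt g u + wt g w = g a"
begin

lemma twimg_wt: "x \<in> lists A \<Longrightarrow> twimg D x (u, w) \<noteq> 0 \<Longrightarrow> wt g u + wt g w = wt g x"
proof (induction x arbitrary: u w)
  case Nil then show ?case by (auto simp: tone_def wt_def split: if_splits)
next
  case (Cons a x)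
  have "(\<Sum>i\<le>length u. \<Sum>j\<le>length w. D a (take i u, take j w) * twimg D x (drop i u, drop j w)) \<noteq> 0"
    using Cons.prems(2) by (simp add: tmul_def)
  then obtain i where "(\<Sum>j\<le>length w. D a (take i u, take j w) * twimg D x (drop i u, drop j w)) \<noteq> 0"
    by (meson sum.not_neutral_contains_not_neutral)
  then obtain j where ij: "D a (take i u, take j w) * twimg D x (drop i u, drop j w) \<noteq> 0"
    by (meson sum.not_neutral_contains_not_neutral)
  have aA: "a \<in> A" and xA: "x \<in> lists A" using Cons.prems(1) by auto
  have 1: "wt g (take i u) + wt g (take j w) = g a" using Dwt[OF aA] ij by simp
  have 2: "wt g (drop i u) + wt g (drop j w) = wt g x" using Cons.IH[OF xA] ij by simp
  have 3: "wt g u = wt g (take i u) + wt g (drop i u)" "wt g w = wt g (take j w) + wt g (drop j w)"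
    by (metis append_take_drop_id sum_list_append map_append wt_def)+
  show ?case using 1 2 3 by (simp add: wt_def)
qed

lemma wt_len: "x \<in> lists A \<Longrightarrow> length x \<le> wt g x"
proof (induction x)
  case Nil then show ?case by (simp add: wt_def)
next
  case (Cons a x) then show ?case using gpos[of a] by (simp add: wt_def)
qed

lemma wt_mem: "a \<in> set x \<Longrightarrow> g a \<le> wt g x"
proof (induction x)
  case Nil then show ?case by simp
next
  case (Cons b x) then show ?case by (auto simp: wt_def)
qed

lemma finite_V: "finite {x. x \<in> lists A \<and> twimg D x p \<noteq> 0}"
proof -
  obtain u w where p: "p = (u, w)" by (cases p)
  define n where "n = wt g u + wt g w"
  have "{x. x \<in> lists A \<and> twimg D x p \<noteq> 0} \<subseteq> {x. set x \<subseteq> {a. a \<in> A \<and> g a \<le> n} \<and> length x \<le> n}"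
  proof
    fix x assume "x \<in> {x. x \<in> lists A \<and> twimg D x p \<noteq> 0}"
    then have x: "x \<in> lists A" "twimg D x (u, w) \<noteq> 0" using p by auto
    then have e: "wt g x = n" using twimg_wt n_def by simp
    have "set x \<subseteq> {a. a \<in> A \<and> g a \<le> n}" using x(1) wt_mem[of _ x] e by auto
    moreover have "length x \<le> n" using wt_len[OF x(1)] e by simp
    ultimately show "x \<in> {x. set x \<subseteq> {a. a \<in> A \<and> g a \<le> n} \<and> length x \<le> n}" by simp
  qed
  then show ?thesis by (rule finite_subset) (rule finite_lists_length_le[OF gfin])
qed

end

locale hopf = lin A B M + cA: coal A DA gA + cB: coal B DB gB
  for A :: "'a set" and B :: "'b set" and M DA gA DB gB +
  assumes letter: "a \<in> A \<Longrightarrow> (\<lambda>p. \<Sum>b\<in>{b. b \<in> B \<and> M a b \<noteq> 0}. M a b * DB b p) = tF (DA a)"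
begin

lemma word_hopf: "v \<in> lists A \<Longrightarrow> (\<lambda>p. \<Sum>x\<in>Fi v. Fw M v x * twimg DB x p) = tF (twimg DA v)"
proof (induction v)
  case Nil
  show ?case by (simp add: Fi_Nil tF_tone)
next
  case (Cons a v)
  have aA: "a \<in> A" and vA: "v \<in> lists A" using Cons.prems by auto
  have fpost: "finite {b. b \<in> B \<and> M a b \<noteq> 0}"
    using finpost[of a] aA by (auto intro: finite_subset)
  have fF: "finite (Fi v)" using vA finite_Fi by auto
  show ?case
  proof
    fix p
    have "(\<Sum>x\<in>Fi (a # v). Fw M (a # v) x * twimg DB x p) =
      (\<Sum>b\<in>{b. b \<in> B \<and> M a b \<noteq> 0}. \<Sum>x\<in>Fi v. M a b * (Fw M v x * tmul (DB b) (twimg DB x) p))"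
      unfolding Fi_Cons by (simp add: sum_cons_image[OF fpost fF] mult.assoc)
    also have "\<dots> = tmul (\<lambda>p. \<Sum>b\<in>{b. b \<in> B \<and> M a b \<noteq> 0}. M a b * DB b p)
                          (\<lambda>p. \<Sum>x\<in>Fi v. Fw M v x * twimg DB x p) p"
      by (simp add: tmul_sum_left[OF fpost] tmul_sum_right[OF fF] tmul_scale_left tmul_scale_right)
    also have "\<dots> = tmul (tF (DA a)) (tF (twimg DA v)) p"
      using letter[OF aA] Cons.IH[OF vA] by simp
    also have "\<dots> = tF (twimg DA (a # v)) p"
      by (simp add: tF_mult)
    finally show "(\<Sum>x\<in>Fi (a # v). Fw M (a # v) x * twimg DB x p) = tF (twimg DA (a # v)) p" .
  qed
qed

lemma tF_prod: "tF T (u, w) = (\<Sum>q\<in>P u \<times> P w. T q * Fw M (fst q) u * Fw M (snd q) w)"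
proof -
  have "{(u', v'). u' \<in> lists A \<and> v' \<in> lists A \<and> Fw M u' u \<noteq> 0 \<and> Fw M v' w \<noteq> 0} = P u \<times> P w"
    by (auto simp: PP_def)
  then show ?thesis by (simp add: tFw_def)
qed

theorem hopf_compat: "tens_ext B DB (E S) = tF (tens_ext A DA S)"
proof
  fix p :: "'b list \<times> 'b list"
  obtain u w where p: "p = (u, w)" by (cases p)
  let ?VB = "{x. x \<in> lists B \<and> twimg DB x p \<noteq> 0}"
  let ?X = "P u \<times> P w"
  let ?VA = "\<lambda>q. {v. v \<in> lists A \<and> twimg DA v q \<noteq> 0}"
  let ?V1 = "\<Union>x\<in>?VB. P x"
  let ?V2 = "\<Union>q\<in>?X. ?VA q"
  have fVB: "finite ?VB" by (rule cB.finite_V)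
  have fX: "finite ?X" using finite_P by auto
  have fV1: "finite ?V1" using fVB finite_P by auto
  have fV2: "finite ?V2" using fX cA.finite_V by auto
  have V1A: "?V1 \<subseteq> lists A" by (auto simp: PP_def)
  have V2A: "?V2 \<subseteq> lists A" by auto
  have wh: "(\<Sum>x\<in>Fi v. Fw M v x * twimg DB x p) = tF (twimg DA v) p" if "v \<in> lists A" for v
    using fun_cong[OF word_hopf[OF that], of p] .
  have "tens_ext B DB (E S) p = (\<Sum>x\<in>?VB. \<Sum>v\<in>P x. S v * (Fw M v x * twimg DB x p))"
    unfolding tens_ext_def E_def' by (simp add: sum_distrib_right mult.assoc)
  also have "\<dots> = (\<Sum>v\<in>?V1. \<Sum>x\<in>Fi v. S v * (Fw M v x * twimg DB x p))"
  proof (rule sum_swap_rel[OF fVB finite_P fV1])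
    show "finite (Fi v)" if "v \<in> ?V1" for v
    proof -
      have "v \<in> lists A" using that V1A by blast
      then show ?thesis by (rule finite_Fi)
    qed
    fix x v assume nz: "S v * (Fw M v x * twimg DB x p) \<noteq> 0"
    show "(x \<in> ?VB \<and> v \<in> P x) = (v \<in> ?V1 \<and> x \<in> Fi v)"
      using nz Fw_lists by (auto simp: PP_def FF_def)
  qed
  also have "\<dots> = (\<Sum>v\<in>?V1. S v * tF (twimg DA v) p)"
  proof (rule sum.cong[OF refl])
    fix v assume "v \<in> ?V1"
    then have "v \<in> lists A" using V1A by blast
    then show "(\<Sum>x\<in>Fi v. S v * (Fw M v x * twimg DB x p)) = S v * tF (twimg DA v) p"
      using wh by (simp add: sum_distrib_left[symmetric])
  qed
  also have "\<dots> = (\<Sum>v\<in>?V1 \<union> ?V2. S v * tF (twimg DA v) p)"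
  proof (rule sum.mono_neutral_left)
    show "finite (?V1 \<union> ?V2)" using fV1 fV2 by auto
    show "\<forall>v\<in>?V1 \<union> ?V2 - ?V1. S v * tF (twimg DA v) p = 0"
    proof
      fix v assume v: "v \<in> ?V1 \<union> ?V2 - ?V1"
      then have vA: "v \<in> lists A" using V1A V2A by auto
      have "(\<Sum>x\<in>Fi v. Fw M v x * twimg DB x p) = 0"
      proof (rule sum.neutral, rule ballI)
        fix x assume x: "x \<in> Fi v"
        show "Fw M v x * twimg DB x p = 0"
        proof (rule ccontr)
          assume "Fw M v x * twimg DB x p \<noteq> 0"
          then have "x \<in> ?VB" "v \<in> P x" using x vA by (auto simp: FF_def PP_def)
          then show False using v by auto
        qed
      qed
      then show "S v * tF (twimg DA v) p = 0" using wh[OF vA] by simp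
    qed
  qed simp
  finally have L: "tens_ext B DB (E S) p = (\<Sum>v\<in>?V1 \<union> ?V2. S v * tF (twimg DA v) p)" .
  have "tF (tens_ext A DA S) p = (\<Sum>q\<in>?X. \<Sum>v\<in>?VA q. S v * (twimg DA v q * Fw M (fst q) u * Fw M (snd q) w))"
    unfolding p tF_prod tens_ext_def
    by (simp add: sum_distrib_right mult.assoc)
  also have "\<dots> = (\<Sum>v\<in>?V2. \<Sum>q\<in>?X. S v * (twimg DA v q * Fw M (fst q) u * Fw M (snd q) w))"
  proof (rule sum_swap_rel[OF fX cA.finite_V fV2])
    show "finite ?X" if "v \<in> ?V2" for v by (rule fX)
    fix q v assume nz: "S v * (twimg DA v q * Fw M (fst q) u * Fw M (snd q) w) \<noteq> 0"
    show "(q \<in> ?X \<and> v \<in> ?VA q) = (v \<in> ?V2 \<and> q \<in> ?X)"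
      using nz by auto
  qed
  also have "\<dots> = (\<Sum>v\<in>?V2. S v * tF (twimg DA v) p)"
    unfolding p tF_prod by (simp add: sum_distrib_left mult.assoc)
  also have "\<dots> = (\<Sum>v\<in>?V1 \<union> ?V2. S v * tF (twimg DA v) p)"
  proof (rule sum.mono_neutral_left)
    show "finite (?V1 \<union> ?V2)" using fV1 fV2 by auto
    show "\<forall>v\<in>?V1 \<union> ?V2 - ?V2. S v * tF (twimg DA v) p = 0"
    proof
      fix v assume v: "v \<in> ?V1 \<union> ?V2 - ?V2"
      then have vA: "v \<in> lists A" using V1A V2A by auto
      have "tF (twimg DA v) p = (\<Sum>q\<in>?X. twimg DA v q * Fw M (fst q) u * Fw M (snd q) w)"
        unfolding p tF_prod by simp
      also have "\<dots> = 0"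
      proof (rule sum.neutral, rule ballI)
        fix q assume q: "q \<in> ?X"
        show "twimg DA v q * Fw M (fst q) u * Fw M (snd q) w = 0"
        proof (rule ccontr)
          assume "twimg DA v q * Fw M (fst q) u * Fw M (snd q) w \<noteq> 0"
          then have "v \<in> ?VA q" using vA by auto
          then show False using v q by auto
        qed
      qed
      finally show "S v * tF (twimg DA v) p = 0" by simp
    qed
  qed simp
  finally show "tens_ext B DB (E S) p = tF (tens_ext A DA S) p" using L by simp
qed

end

section \<open>Roots of unity\<close>

lemma zeta_pow: "zeta N ^ k = cis (2 * pi * real k / real N)"
proof -
  have "zeta N = cis (2 * pi / real N)"
    by (simp add: zeta_def cis_conv_exp mult.commute)
  moreover have "real k * (2 * pi / real N) = 2 * pi * real k / real N" by simp
  ultimately show ?thesis by (simp only: DeMoivre)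
qed

lemma zeta_N: "N > 0 \<Longrightarrow> zeta N ^ N = 1"
  by (simp add: zeta_pow)

lemma mu_fin: "N > 0 \<Longrightarrow> finite (mu N)"
  unfolding mu_def by (rule finite_roots_unity) simp

lemma mu_card: "N > 0 \<Longrightarrow> card (mu N) = N"
  unfolding mu_def by (rule card_roots_unity_eq)

lemma zeta_pow_mu: "N > 0 \<Longrightarrow> zeta N ^ m \<in> mu N"
proof -
  assume N: "N > 0"
  have "(zeta N ^ m) ^ N = (zeta N ^ N) ^ m" by (simp add: power_mult[symmetric] mult.commute)
  then show ?thesis using zeta_N[OF N] by (simp add: mu_def)
qed

lemma mu_nz: "N > 0 \<Longrightarrow> z \<in> mu N \<Longrightarrow> z \<noteq> 0"
  by (auto simp: mu_def zero_power)

lemma mu_mult: "z \<in> mu N \<Longrightarrow> w \<in> mu N \<Longrightarrow> z * w \<in> mu N"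
  by (simp add: mu_def power_mult_distrib)

lemma mu_inverse: "z \<in> mu N \<Longrightarrow> inverse z \<in> mu N"
  by (simp add: mu_def power_inverse)

lemma zeta_bij: assumes N: "N > 0" shows "bij_betw (\<lambda>m. zeta N ^ m) {1..N} (mu N)"
proof -
  have img: "(\<lambda>m. zeta N ^ m) ` {1..N} = mu N"
  proof
    show "(\<lambda>m. zeta N ^ m) ` {1..N} \<subseteq> mu N" using zeta_pow_mu[OF N] by auto
    show "mu N \<subseteq> (\<lambda>m. zeta N ^ m) ` {1..N}"
    proof
      fix z assume "z \<in> mu N"
      then obtain k where k: "k < N" "z = cis (2 * pi * real k / real N)"
        using bij_betw_roots_unity[OF N] unfolding mu_def bij_betw_def by auto
      show "z \<in> (\<lambda>m. zeta N ^ m) ` {1..N}"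
      proof (cases "k = 0")
        case True
        then have "z = zeta N ^ N" using k zeta_N[OF N] by simp
        then show ?thesis using N by auto
      next
        case False
        then have "z = zeta N ^ k" using k by (simp add: zeta_pow)
        then show ?thesis using False k by auto
      qed
    qed
  qed
  have c: "card ((\<lambda>m. zeta N ^ m) ` {1..N}) = card {1..N}"
    by (subst img) (simp add: mu_card[OF N])
  have "inj_on (\<lambda>m. zeta N ^ m) {1..N}"
    by (rule eq_card_imp_inj_on[OF _ c]) simp
  then show ?thesis using img by (simp add: bij_betw_def)
qed

lemma zeta_inj: "N > 0 \<Longrightarrow> m \<in> {1..N} \<Longrightarrow> n \<in> {1..N} \<Longrightarrow> zeta N ^ m = zeta N ^ n \<Longrightarrow> m = n"
  using zeta_bij unfolding bij_betw_def inj_on_def by blast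

lemma geo_mu:
  assumes N: "N > 0" and y: "y \<in> mu N"
  shows "(\<Sum>m=1..N. y ^ m) = (if y = 1 then of_nat N else 0)"
proof (cases "y = 1")
  case True then show ?thesis by simp
next
  case False
  have "(\<Sum>m=1..N. y ^ m) = (\<Sum>m<N. y ^ Suc m)"
    by (simp add: sum.atLeast1_atMost_eq)
  also have "\<dots> = y * (\<Sum>m<N. y ^ m)" by (simp add: sum_distrib_left)
  also have "(\<Sum>m<N. y ^ m) = (y ^ N - 1) / (y - 1)" using False by (rule geometric_sum)
  also have "y ^ N = 1" using y by (simp add: mu_def)
  finally show ?thesis using False by simp
qed

lemma iota_bij: assumes N: "N > 0" shows "bij_betw (iota_inv N) {..<N} {1..N}"
proof (rule bij_betw_byWitness[where f' = "\<lambda>m. m mod N"])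
  show "\<forall>a\<in>{..<N}. iota_inv N a mod N = a" by (auto simp: iota_inv_def)
  show "\<forall>a'\<in>{1..N}. iota_inv N (a' mod N) = a'"
  proof
    fix m assume m: "m \<in> {1..N}"
    show "iota_inv N (m mod N) = m"
    proof (cases "m = N")
      case True then show ?thesis by (simp add: iota_inv_def)
    next
      case False then have "m < N" using m by auto
      then show ?thesis using m by (auto simp: iota_inv_def)
    qed
  qed
  show "iota_inv N ` {..<N} \<subseteq> {1..N}" using N by (auto simp: iota_inv_def)
  show "(\<lambda>m. m mod N) ` {1..N} \<subseteq> {..<N}" using N by auto
qed

lemma iota_range: "N > 0 \<Longrightarrow> a < N \<Longrightarrow> iota_inv N a \<in> {1..N}"
  by (auto simp: iota_inv_def)

lemma iota_inj: "a < N \<Longrightarrow> b < N \<Longrightarrow> iota_inv N a = iota_inv N b \<Longrightarrow> a = b"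
  by (auto simp: iota_inv_def split: if_splits)

text \<open>Orthogonality relations\<close>

lemma orth1:
  assumes N: "N > 0" and a: "a < N" and b: "b < N"
  shows "(\<Sum>z\<in>mu N. inverse z ^ iota_inv N a * z ^ iota_inv N b) = (if a = b then of_nat N else 0)"
proof -
  let ?i = "iota_inv N a" and ?j = "iota_inv N b"
  define y where "y = inverse (zeta N ^ ?i) * zeta N ^ ?j"
  have "(\<Sum>z\<in>mu N. inverse z ^ ?i * z ^ ?j) = (\<Sum>m\<in>{1..N}. inverse (zeta N ^ m) ^ ?i * (zeta N ^ m) ^ ?j)"
    by (rule sum.reindex_bij_betw[OF zeta_bij[OF N], symmetric])
  also have "\<dots> = (\<Sum>m\<in>{1..N}. y ^ m)"
    by (rule sum.cong[OF refl]) (simp add: y_def power_mult_distrib power_inverse power_mult[symmetric] mult.commute)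
  also have "\<dots> = (if y = 1 then of_nat N else 0)"
    by (rule geo_mu[OF N]) (simp add: y_def mu_mult mu_inverse zeta_pow_mu N)
  also have "(y = 1) \<longleftrightarrow> a = b"
  proof
    assume "y = 1"
    then have "zeta N ^ ?j = zeta N ^ ?i"
      using mu_nz[OF N zeta_pow_mu[OF N]] by (simp add: y_def field_simps)
    then have "?j = ?i" by (rule zeta_inj[OF N iota_range[OF N b] iota_range[OF N a]])
    then show "a = b" using iota_inj a b by metis
  next
    assume "a = b"
    then show "y = 1" using mu_nz[OF N zeta_pow_mu[OF N]] by (simp add: y_def)
  qed
  finally show ?thesis .
qed

lemma orth2:
  assumes N: "N > 0" and z: "z \<in> mu N" and w: "w \<in> mu N"
  shows "(\<Sum>a<N. z ^ iota_inv N a * inverse w ^ iota_inv N a) = (if z = w then of_nat N else 0)"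
proof -
  define y where "y = z * inverse w"
  have "(\<Sum>a<N. z ^ iota_inv N a * inverse w ^ iota_inv N a) = (\<Sum>a<N. y ^ iota_inv N a)"
    by (simp add: y_def power_mult_distrib)
  also have "\<dots> = (\<Sum>m\<in>{1..N}. y ^ m)"
    by (rule sum.reindex_bij_betw[OF iota_bij[OF N]])
  also have "\<dots> = (if y = 1 then of_nat N else 0)"
    by (rule geo_mu[OF N]) (simp add: y_def mu_mult mu_inverse z w)
  also have "(y = 1) \<longleftrightarrow> z = w"
    using mu_nz[OF N w] by (auto simp: y_def field_simps)
  finally show ?thesis .
qed

lemma coef:
  assumes N: "N > 0"
  shows "(\<Sum>m=1..N. zeta N powi (- int (m * i)) * (if z = zeta N ^ m then 1 else 0)) =
         (if z \<in> mu N then inverse z ^ i else 0)"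
proof (cases "z \<in> mu N")
  case True
  then obtain m0 where m0: "m0 \<in> {1..N}" "z = zeta N ^ m0"
    using bij_betw_imp_surj_on[OF zeta_bij[OF N]] by blast
  have "(\<Sum>m=1..N. zeta N powi (- int (m * i)) * (if z = zeta N ^ m then 1 else 0)) =
        (\<Sum>m\<in>{1..N}. if m = m0 then zeta N powi (- int (m0 * i)) else 0)"
  proof (rule sum.cong[OF refl])
    fix m assume m: "m \<in> {1..N}"
    have eq: "(z = zeta N ^ m) = (m = m0)"
    proof
      assume "z = zeta N ^ m"
      then show "m = m0" using zeta_inj[OF N m m0(1)] m0(2) by metis
    next
      assume "m = m0"
      then show "z = zeta N ^ m" using m0(2) by metis
    qed
    show "zeta N powi (- int (m * i)) * (if z = zeta N ^ m then 1 else 0) =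
        (if m = m0 then zeta N powi (- int (m0 * i)) else 0)"
      unfolding eq by (cases "m = m0") (simp_all only: simp_thms if_True if_False mult_1_right mult_zero_right)
  qed
  also have "\<dots> = zeta N powi (- int (m0 * i))"
    by (simp only: sum.delta[OF finite_atLeastAtMost] m0(1) if_True)
  also have "\<dots> = inverse z ^ i"
  proof -
    have "zeta N powi (- int (m0 * i)) = inverse (zeta N powi (int (m0 * i)))" by (rule power_int_minus)
    also have "zeta N powi (int (m0 * i)) = zeta N ^ (m0 * i)" by (rule power_int_of_nat)
    also have "\<dots> = z ^ i" by (simp only: m0(2) power_mult)
    finally show ?thesis by (simp only: power_inverse)
  qed
  finally show ?thesis using True by (simp only: if_True)
next
  case False
  have "\<forall>m\<in>{1..N}. zeta N powi (- int (m * i)) * (if z = zeta N ^ m then 1 else 0) = 0"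
  proof
    fix m
    have "z \<noteq> zeta N ^ m" using zeta_pow_mu[OF N, of m] False by metis
    then show "zeta N powi (- int (m * i)) * (if z = zeta N ^ m then 1 else 0) = 0"
      by (simp only: if_False mult_zero_right)
  qed
  then have "(\<Sum>m=1..N. zeta N powi (- int (m * i)) * (if z = zeta N ^ m then 1 else 0)) = 0"
    by (rule sum.neutral)
  then show ?thesis using False by (simp only: if_False)
qed


lemma QmuN_subfield: "is_subfield (QmuN N)"
  unfolding is_subfield_def QmuN_def by (auto simp: is_subfield_def)

lemma mu_QmuN: "mu N \<subseteq> QmuN N"
  unfolding QmuN_def by auto

lemma subfield_pow: "is_subfield K \<Longrightarrow> x \<in> K \<Longrightarrow> x ^ n \<in> K"
  by (induction n) (auto simp: is_subfield_def)

lemma subfield_nat: "is_subfield K \<Longrightarrow> of_nat n \<in> K"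
  by (induction n) (auto simp: is_subfield_def)

lemma subfield_div: "is_subfield K \<Longrightarrow> x \<in> K \<Longrightarrow> y \<in> K \<Longrightarrow> x / y \<in> K"
  unfolding divide_inverse is_subfield_def by (cases "y = 0") auto

lemma wimg_Fw:
  assumes L: "\<And>a w. phi a w \<noteq> 0 \<Longrightarrow> length w = 1"
  shows "wimg phi v = Fw (\<lambda>a b. phi a [b]) v"
proof (induction v)
  case Nil
  show ?case
  proof
    fix x show "wimg phi [] x = Fw (\<lambda>a b. phi a [b]) [] x"
      by (cases x) (auto simp: wimg_def sone_def)
  qed
next
  case (Cons a v)
  show ?case
  proof
    fix x
    have w: "wimg phi (a # v) x = (\<Sum>i\<le>length x. phi a (take i x) * wimg phi v (drop i x))"
      by (simp add: wimg_def smul_def)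
    show "wimg phi (a # v) x = Fw (\<lambda>a b. phi a [b]) (a # v) x"
    proof (cases x)
      case Nil
      have "phi a [] = 0" using L[of a "[]"] by auto
      then show ?thesis using w Nil by simp
    next
      case (Cons b x')
      have "(\<Sum>i\<le>length x. phi a (take i x) * wimg phi v (drop i x)) =
            (\<Sum>i\<le>length x. if i = 1 then phi a [b] * wimg phi v x' else 0)"
      proof (rule sum.cong[OF refl])
        fix i assume i: "i \<in> {..length x}"
        show "phi a (take i x) * wimg phi v (drop i x) = (if i = 1 then phi a [b] * wimg phi v x' else 0)"
        proof (cases "i = 1")
          case True then show ?thesis using Cons by simp
        next
          case False
          then have "length (take i x) \<noteq> 1" using Cons i by (cases i) auto
          then have "phi a (take i x) = 0" using L by blast
          then show ?thesis using False by simp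
        qed
      qed
      also have "\<dots> = phi a [b] * wimg phi v x'"
        by (simp only: sum.delta[OF finite_atMost]) (simp add: Cons)
      finally show ?thesis using w Cons \<open>wimg phi v = _\<close> by simp
    qed
  qed
qed

lemma ext_Ew:
  assumes L: "\<And>a w. phi a w \<noteq> 0 \<Longrightarrow> length w = 1"
  shows "ext A phi = Ew A (\<lambda>a b. phi a [b])"
proof -
  have W: "\<And>v. wimg phi v = Fw (\<lambda>a b. phi a [b]) v" by (rule wimg_Fw, erule L)
  show ?thesis unfolding Defs.ext_def Ew_def W by (rule refl)
qed

lemma tmap_tFw:
  assumes L: "\<And>a w. phi a w \<noteq> 0 \<Longrightarrow> length w = 1"
  shows "tmap A phi = tFw A (\<lambda>a b. phi a [b])"
proof -
  have W: "\<And>v. wimg phi v = Fw (\<lambda>a b. phi a [b]) v" by (rule wimg_Fw, erule L)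
  show ?thesis unfolding tmap_def tFw_def W by (rule refl)
qed

lemma Fw_single: "Fw M [a] u = (if length u = 1 then M a (hd u) else 0)"
proof (cases u)
  case Nil then show ?thesis by simp
next
  case (Cons b u') then show ?thesis by (cases u') auto
qed

lemma Fw_Nil: "Fw M [] u = (if u = [] then 1 else 0)"
  by (cases u) auto

context lin begin

lemma post_single: "a \<in> A \<Longrightarrow>
  (\<Sum>b\<in>{b. b \<in> B \<and> M a b \<noteq> 0}. M a b * (if u = [b] then 1 else 0)) = Fw M [a] u"
proof -
  assume aA: "a \<in> A"
  have fpost: "finite {b. b \<in> B \<and> M a b \<noteq> 0}"
    using finpost[OF aA] by (auto intro: finite_subset)
  show ?thesis
  proof (cases "length u = 1")
    case True
    then obtain b' where u: "u = [b']" by (cases u) auto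
    have "(\<Sum>b\<in>{b. b \<in> B \<and> M a b \<noteq> 0}. M a b * (if u = [b] then 1 else 0)) =
          (\<Sum>b\<in>{b. b \<in> B \<and> M a b \<noteq> 0}. if b = b' then M a b else 0)"
      using u by (intro sum.cong) auto
    also have "\<dots> = M a b'" using fpost supp[OF aA, of b'] by (auto simp: sum.delta)
    finally show ?thesis using u by simp
  next
    case False
    then have "u \<noteq> [b]" for b by auto
    then show ?thesis using False by (simp add: Fw_single)
  qed
qed

lemma shuffle_letter:
  assumes aA: "a \<in> A"
  shows "(\<lambda>p. \<Sum>b\<in>{b. b \<in> B \<and> M a b \<noteq> 0}. M a b * prim b p) = tF (prim a)"
proof (rule ext, clarify)
  fix u w
  have "tF (prim a) (u, w) = tF (etens [a] []) (u, w) + tF (etens [] [a]) (u, w)"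
    unfolding prim_def by (rule tF_add)
  also have "\<dots> = Fw M [a] u * Fw M [] w + Fw M [] u * Fw M [a] w"
    using aA by (simp add: tF_etens)
  also have "\<dots> = (\<Sum>b\<in>{b. b \<in> B \<and> M a b \<noteq> 0}. M a b * (if u = [b] then 1 else 0)) * (if w = [] then 1 else 0)
      + (if u = [] then 1 else 0) * (\<Sum>b\<in>{b. b \<in> B \<and> M a b \<noteq> 0}. M a b * (if w = [b] then 1 else 0))"
    by (simp add: post_single[OF aA] Fw_Nil)
  also have "\<dots> = (\<Sum>b\<in>{b. b \<in> B \<and> M a b \<noteq> 0}. M a b * prim b (u, w))"
    by (simp add: prim_def etens_def sum_distrib_right sum_distrib_left sum.distrib[symmetric] algebra_simps)
  finally show "(\<Sum>b\<in>{b. b \<in> B \<and> M a b \<noteq> 0}. M a b * prim b (u, w)) = tF (prim a) (u, w)" by simp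
qed

end

lemma prim_wt: "prim a (u, w) \<noteq> 0 \<Longrightarrow> wt g u + wt g w = g a"
  by (auto simp: prim_def etens_def wt_def split: if_splits)

lemma subfield_basic: "is_subfield K \<Longrightarrow> 0 \<in> K \<and> 1 \<in> K"
  by (simp add: is_subfield_def)

section \<open>The X instance\<close>

definition MX :: "nat \<Rightarrow> xtl \<Rightarrow> xl \<Rightarrow> complex" where
  "MX N = (\<lambda>a b. F_letter N a [b])"

definition MXi :: "nat \<Rightarrow> xl \<Rightarrow> xtl \<Rightarrow> complex" where
  "MXi N b a = (case b of X0 \<Rightarrow> (if a = XT then 1 else 0)
     | XZ z \<Rightarrow> (case a of XT \<Rightarrow> 0 | XTA al \<Rightarrow> (if al < N then z ^ iota_inv N al / of_nat N else 0)))"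

lemma MX_XT: "MX N XT b = (if b = X0 then 1 else 0)"
  by (simp add: MX_def F_letter_def sletter_def)

lemma MX_XTA_X0: "MX N (XTA al) X0 = 0"
  by (simp add: MX_def F_letter_def sletter_def)

lemma MX_XTA_XZ: assumes N: "N > 0"
  shows "MX N (XTA al) (XZ z) = (if z \<in> mu N then inverse z ^ iota_inv N al else 0)"
proof -
  have "MX N (XTA al) (XZ z) = (\<Sum>m=1..N. zeta N powi (- int (m * iota_inv N al)) * (if z = zeta N ^ m then 1 else 0))"
    unfolding MX_def F_letter_def sletter_def by simp
  also have "\<dots> = (if z \<in> mu N then inverse z ^ iota_inv N al else 0)" by (rule coef[OF N])
  finally show ?thesis .
qed

lemma F_letter_len: "F_letter N a w \<noteq> 0 \<Longrightarrow> length w = 1"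
proof (cases a)
  case XT
  assume "F_letter N a w \<noteq> 0"
  then show ?thesis using XT by (auto simp: F_letter_def sletter_def split: if_splits)
next
  case (XTA al)
  assume "F_letter N a w \<noteq> 0"
  then have "(\<Sum>m=1..N. zeta N powi (- int (m * iota_inv N al)) * sletter (XZ (zeta N ^ m)) w) \<noteq> 0"
    using XTA by (simp add: F_letter_def)
  then obtain m where "zeta N powi (- int (m * iota_inv N al)) * sletter (XZ (zeta N ^ m)) w \<noteq> 0"
    by (meson sum.not_neutral_contains_not_neutral)
  then have "sletter (XZ (zeta N ^ m)) w \<noteq> 0" by auto
  then show ?thesis by (auto simp: sletter_def split: if_splits)
qed

lemma alphXt_fin: "finite (alphXt N)" by (simp add: alphXt_def)
lemma alphX_fin: "N > 0 \<Longrightarrow> finite (alphX N)" by (simp add: alphX_def mu_fin)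

lemma sum_alphXt: "(\<Sum>a\<in>alphXt N. f a) = f XT + (\<Sum>al<N. f (XTA al))"
proof -
  have "XT \<notin> XTA ` {..<N}" by auto
  moreover have "inj_on XTA {..<N}" by (auto simp: inj_on_def)
  ultimately show ?thesis by (simp add: alphXt_def sum.reindex)
qed

lemma sum_alphX: "N > 0 \<Longrightarrow> (\<Sum>b\<in>alphX N. f b) = f X0 + (\<Sum>z\<in>mu N. f (XZ z))"
proof -
  assume N: "N > 0"
  have "X0 \<notin> XZ ` mu N" by auto
  moreover have "inj_on XZ (mu N)" by (auto simp: inj_on_def)
  ultimately show ?thesis using mu_fin[OF N] by (simp add: alphX_def sum.reindex)
qed

lemma MX_supp: "N > 0 \<Longrightarrow> a \<in> alphXt N \<Longrightarrow> MX N a b \<noteq> 0 \<Longrightarrow> b \<in> alphX N"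
proof -
  assume N: "N > 0" and a: "a \<in> alphXt N" and nz: "MX N a b \<noteq> 0"
  show ?thesis
  proof (cases a)
    case XT then show ?thesis using nz by (auto simp: MX_XT alphX_def split: if_splits)
  next
    case (XTA al)
    show ?thesis
    proof (cases b)
      case X0 then show ?thesis using nz XTA by (simp add: MX_XTA_X0)
    next
      case (XZ z) then show ?thesis using nz XTA by (auto simp: MX_XTA_XZ[OF N] alphX_def split: if_splits)
    qed
  qed
qed

lemma MXi_supp: "b \<in> alphX N \<Longrightarrow> MXi N b a \<noteq> 0 \<Longrightarrow> a \<in> alphXt N"
  by (auto simp: MXi_def alphXt_def split: xl.splits xtl.splits if_splits)

lemma lin_X: "N > 0 \<Longrightarrow> lin (alphXt N) (alphX N) (MX N)"
proof unfold_locales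
  assume N: "N > 0"
  show "a \<in> alphXt N \<Longrightarrow> MX N a b \<noteq> 0 \<Longrightarrow> b \<in> alphX N" for a b by (rule MX_supp[OF N])
  show "finite {a. a \<in> alphXt N \<and> MX N a b \<noteq> 0}" for b
    using alphXt_fin by (rule rev_finite_subset) auto
  show "a \<in> alphXt N \<Longrightarrow> finite {b. MX N a b \<noteq> 0}" for a
    using alphX_fin[OF N] by (rule rev_finite_subset) (auto intro: MX_supp[OF N])
qed

lemma lin_Xi: "N > 0 \<Longrightarrow> lin (alphX N) (alphXt N) (MXi N)"
proof unfold_locales
  assume N: "N > 0"
  show "a \<in> alphX N \<Longrightarrow> MXi N a b \<noteq> 0 \<Longrightarrow> b \<in> alphXt N" for a b by (rule MXi_supp)
  show "finite {a. a \<in> alphX N \<and> MXi N a b \<noteq> 0}" for b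
    using alphX_fin[OF N] by (rule rev_finite_subset) auto
  show "a \<in> alphX N \<Longrightarrow> finite {b. MXi N a b \<noteq> 0}" for a
    using alphXt_fin by (rule rev_finite_subset) (auto intro: MXi_supp)
qed

lemma lin_inv_X: assumes N: "N > 0" shows "lin_inv (alphXt N) (alphX N) (MX N) (MXi N)"
proof -
  interpret L1: lin "alphXt N" "alphX N" "MX N" by (rule lin_X[OF N])
  interpret L2: lin "alphX N" "alphXt N" "MXi N" by (rule lin_Xi[OF N])
  have Nnz: "(of_nat N :: complex) \<noteq> 0" using N by simp
  show ?thesis
  proof unfold_locales
    fix a c assume a: "a \<in> alphXt N" and c: "c \<in> alphXt N"
    have "(\<Sum>b\<in>{b. b \<in> alphX N \<and> MX N a b \<noteq> 0}. MX N a b * MXi N b c) = (\<Sum>b\<in>alphX N. MX N a b * MXi N b c)"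
      by (rule sum.mono_neutral_left) (auto simp: alphX_fin[OF N])
    also have "\<dots> = MX N a X0 * MXi N X0 c + (\<Sum>z\<in>mu N. MX N a (XZ z) * MXi N (XZ z) c)"
      by (rule sum_alphX[OF N])
    also have "\<dots> = (if a = c then 1 else 0)"
    proof (cases a)
      case XT
      then show ?thesis by (simp add: MX_XT MXi_def)
    next
      case (XTA al)
      then have al: "al < N" using a by (auto simp: alphXt_def)
      show ?thesis
      proof (cases c)
        case XT then show ?thesis using XTA by (simp add: MX_XTA_X0 MXi_def)
      next
        case (XTA be)
        then have be: "be < N" using c by (auto simp: alphXt_def)
        have "(\<Sum>z\<in>mu N. MX N a (XZ z) * MXi N (XZ z) c) =
              (\<Sum>z\<in>mu N. inverse z ^ iota_inv N al * z ^ iota_inv N be) / of_nat N"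
          unfolding sum_divide_distrib
          by (rule sum.cong[OF refl]) (simp add: \<open>a = XTA al\<close> XTA MX_XTA_XZ[OF N] MXi_def be)
        also have "\<dots> = (if al = be then 1 else 0)" using orth1[OF N al be] Nnz by simp
        finally show ?thesis using \<open>a = XTA al\<close> XTA by (simp add: MX_XTA_X0)
      qed
    qed
    finally show "(\<Sum>b\<in>{b. b \<in> alphX N \<and> MX N a b \<noteq> 0}. MX N a b * MXi N b c) = (if a = c then 1 else 0)" .
  next
    fix b d assume b: "b \<in> alphX N" and d: "d \<in> alphX N"
    have "(\<Sum>a\<in>{a. a \<in> alphXt N \<and> MXi N b a \<noteq> 0}. MXi N b a * MX N a d) = (\<Sum>a\<in>alphXt N. MXi N b a * MX N a d)"
      by (rule sum.mono_neutral_left) (auto simp: alphXt_fin)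
    also have "\<dots> = MXi N b XT * MX N XT d + (\<Sum>al<N. MXi N b (XTA al) * MX N (XTA al) d)"
      by (rule sum_alphXt)
    also have "\<dots> = (if b = d then 1 else 0)"
    proof (cases b)
      case X0
      then show ?thesis by (simp add: MX_XT MXi_def)
    next
      case (XZ z)
      then have z: "z \<in> mu N" using b by (auto simp: alphX_def)
      show ?thesis
      proof (cases d)
        case X0 then show ?thesis using XZ by (simp add: MX_XTA_X0 MXi_def)
      next
        case (XZ w)
        then have w: "w \<in> mu N" using d by (auto simp: alphX_def)
        have "(\<Sum>al<N. MXi N b (XTA al) * MX N (XTA al) d) =
              (\<Sum>al<N. z ^ iota_inv N al * inverse w ^ iota_inv N al) / of_nat N"
          unfolding sum_divide_distrib
          by (rule sum.cong[OF refl]) (simp add: \<open>b = XZ z\<close> XZ MX_XTA_XZ[OF N] MXi_def w)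
        also have "\<dots> = (if z = w then 1 else 0)" using orth2[OF N z w] Nnz by simp
        finally show ?thesis using \<open>b = XZ z\<close> XZ by (simp add: MXi_def)
      qed
    qed
    finally show "(\<Sum>a\<in>{a. a \<in> alphXt N \<and> MXi N b a \<noteq> 0}. MXi N b a * MX N a d) = (if b = d then 1 else 0)" .
  qed
qed

lemma K_mu: "z \<in> mu N \<Longrightarrow> z \<in> QmuN N" using mu_QmuN by auto

lemma MX_K: assumes N: "N > 0" shows "a \<in> alphXt N \<Longrightarrow> MX N a b \<in> QmuN N"
proof -
  have K: "is_subfield (QmuN N)" by (rule QmuN_subfield)
  assume a: "a \<in> alphXt N"
  show ?thesis
  proof (cases a)
    case XT then show ?thesis using K by (simp add: MX_XT is_subfield_def)
  next
    case (XTA al)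
    show ?thesis
    proof (cases b)
      case X0 then show ?thesis using XTA K by (simp add: MX_XTA_X0 is_subfield_def)
    next
      case (XZ z)
      show ?thesis using XTA XZ K K_mu[OF mu_inverse, of z N]
        by (auto simp: MX_XTA_XZ[OF N] is_subfield_def intro: subfield_pow)
    qed
  qed
qed

lemma MXi_K: assumes N: "N > 0" shows "b \<in> alphX N \<Longrightarrow> MXi N b a \<in> QmuN N"
proof -
  have K: "is_subfield (QmuN N)" by (rule QmuN_subfield)
  assume b: "b \<in> alphX N"
  show ?thesis
  proof (cases b)
    case X0 then show ?thesis using K by (simp add: MXi_def is_subfield_def)
  next
    case (XZ z)
    then have z: "z \<in> mu N" using b by (auto simp: alphX_def)
    show ?thesis
    proof (cases a)
      case XT then show ?thesis using XZ K by (simp add: MXi_def is_subfield_def)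
    next
      case (XTA al)
      have "z ^ iota_inv N al / of_nat N \<in> QmuN N"
        using K K_mu[OF z] by (intro subfield_div subfield_pow subfield_nat)
      then show ?thesis using XZ XTA K by (simp add: MXi_def is_subfield_def)
    qed
  qed
qed

lemma FX_eq: "FX N = Ew (alphXt N) (MX N)"
  unfolding FX_def MX_def by (rule ext_Ew) (rule F_letter_len)

lemma tmapX_eq: "tmap (alphXt N) (F_letter N) = tFw (alphXt N) (MX N)"
  unfolding MX_def by (rule tmap_tFw) (rule F_letter_len)

lemma coal_prim: "finite A \<Longrightarrow> coal A prim (\<lambda>_. 1)"
  by unfold_locales (auto intro: prim_wt rev_finite_subset)

theorem partX:
  assumes N: "N > 0"
  shows "alg_iso (QmuN N) (alphXt N) (alphX N) (FX N) \<and>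
          (\<forall>S\<in>ser (QmuN N) (alphXt N).
             Dsh N (FX N S) = tmap (alphXt N) (F_letter N) (Dsht N S))"
proof
  interpret li: lin_inv "alphXt N" "alphX N" "MX N" "MXi N" by (rule lin_inv_X[OF N])
  show "alg_iso (QmuN N) (alphXt N) (alphX N) (FX N)"
    unfolding FX_eq
    by (rule li.alg_iso_E[OF QmuN_subfield]) (auto intro: MX_K[OF N] MXi_K[OF N])
  interpret h: hopf "alphXt N" "alphX N" "MX N" prim "\<lambda>_. 1" prim "\<lambda>_. 1"
    by (rule hopf.intro[OF lin_X[OF N] coal_prim[OF alphXt_fin] coal_prim[OF alphX_fin[OF N]]],
        rule hopf_axioms.intro, rule lin.shuffle_letter[OF lin_X[OF N]])
  show "\<forall>S\<in>ser (QmuN N) (alphXt N). Dsh N (FX N S) = tmap (alphXt N) (F_letter N) (Dsht N S)"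
    unfolding Dsh_def Dsht_def FX_eq tmapX_eq using h.hopf_compat by blast
qed

section \<open>The Y instance\<close>

definition MY :: "nat \<Rightarrow> ytl \<Rightarrow> yl \<Rightarrow> complex" where
  "MY N = (\<lambda>a b. FY_letter N a [b])"

definition MYi :: "nat \<Rightarrow> yl \<Rightarrow> ytl \<Rightarrow> complex" where
  "MYi N b a = (case b of YL k z \<Rightarrow> (case a of YTL k' al \<Rightarrow>
      (if k' = k \<and> al < N then z ^ iota_inv N al / of_nat N else 0)))"

definition gYt :: "ytl \<Rightarrow> nat" where "gYt y = (case y of YTL k a \<Rightarrow> k)"
definition gY :: "yl \<Rightarrow> nat" where "gY y = (case y of YL k z \<Rightarrow> k)"

lemma MY_val: assumes N: "N > 0"
  shows "MY N (YTL k al) (YL k' z) = (if k' = k \<and> z \<in> mu N then inverse z ^ iota_inv N al else 0)"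
proof (cases "k' = k")
  case True
  have "MY N (YTL k al) (YL k' z) = (\<Sum>m=1..N. zeta N powi (- int (m * iota_inv N al)) * (if z = zeta N ^ m then 1 else 0))"
    unfolding MY_def FY_letter_def sletter_def using True by simp
  also have "\<dots> = (if z \<in> mu N then inverse z ^ iota_inv N al else 0)" by (rule coef[OF N])
  finally show ?thesis using True by simp
next
  case False
  then show ?thesis unfolding MY_def FY_letter_def sletter_def by simp
qed

lemma FY_letter_len: "FY_letter N a w \<noteq> 0 \<Longrightarrow> length w = 1"
proof (cases a)
  case (YTL k al)
  assume "FY_letter N a w \<noteq> 0"
  then have "(\<Sum>m=1..N. zeta N powi (- int (m * iota_inv N al)) * sletter (YL k (zeta N ^ m)) w) \<noteq> 0"
    using YTL by (simp add: FY_letter_def)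
  then obtain m where "zeta N powi (- int (m * iota_inv N al)) * sletter (YL k (zeta N ^ m)) w \<noteq> 0"
    by (meson sum.not_neutral_contains_not_neutral)
  then have "sletter (YL k (zeta N ^ m)) w \<noteq> 0" by auto
  then show ?thesis by (auto simp: sletter_def split: if_splits)
qed

lemma inA: "YTL k al \<in> alphYt N \<longleftrightarrow> 1 \<le> k \<and> al < N" by (auto simp: alphYt_def)
lemma inB: "YL k z \<in> alphY N \<longleftrightarrow> 1 \<le> k \<and> z \<in> mu N" by (auto simp: alphY_def)

lemma lin_Y: assumes N: "N > 0" shows "lin (alphYt N) (alphY N) (MY N)"
proof unfold_locales
  fix a b assume a: "a \<in> alphYt N" and nz: "MY N a b \<noteq> 0"
  obtain k al where ak: "a = YTL k al" by (cases a)
  obtain k' z where bk: "b = YL k' z" by (cases b)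
  show "b \<in> alphY N" using a nz ak bk by (auto simp: MY_val[OF N] inA inB split: if_splits)
next
  fix b
  obtain k' z where bk: "b = YL k' z" by (cases b)
  have "{a. a \<in> alphYt N \<and> MY N a b \<noteq> 0} \<subseteq> (\<lambda>al. YTL k' al) ` {..<N}"
  proof
    fix a assume "a \<in> {a. a \<in> alphYt N \<and> MY N a b \<noteq> 0}"
    moreover obtain k al where "a = YTL k al" by (cases a)
    ultimately show "a \<in> (\<lambda>al. YTL k' al) ` {..<N}" using bk by (auto simp: MY_val[OF N] inA split: if_splits)
  qed
  then show "finite {a. a \<in> alphYt N \<and> MY N a b \<noteq> 0}" by (rule finite_subset) simp
next
  fix a
  obtain k al where ak: "a = YTL k al" by (cases a)
  have "{b. MY N a b \<noteq> 0} \<subseteq> (\<lambda>z. YL k z) ` mu N"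
  proof
    fix b assume "b \<in> {b. MY N a b \<noteq> 0}"
    moreover obtain k' z where "b = YL k' z" by (cases b)
    ultimately show "b \<in> (\<lambda>z. YL k z) ` mu N" using ak by (auto simp: MY_val[OF N] split: if_splits)
  qed
  then show "finite {b. MY N a b \<noteq> 0}" by (rule finite_subset) (simp add: mu_fin[OF N])
qed

lemma lin_Yi: assumes N: "N > 0" shows "lin (alphY N) (alphYt N) (MYi N)"
proof unfold_locales
  fix b a assume b: "b \<in> alphY N" and nz: "MYi N b a \<noteq> 0"
  obtain k al where ak: "a = YTL k al" by (cases a)
  obtain k' z where bk: "b = YL k' z" by (cases b)
  show "a \<in> alphYt N" using b nz ak bk by (auto simp: MYi_def inA inB split: if_splits)
next
  fix a
  obtain k al where ak: "a = YTL k al" by (cases a)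
  have "{b. b \<in> alphY N \<and> MYi N b a \<noteq> 0} \<subseteq> (\<lambda>z. YL k z) ` mu N"
  proof
    fix b assume "b \<in> {b. b \<in> alphY N \<and> MYi N b a \<noteq> 0}"
    moreover obtain k' z where "b = YL k' z" by (cases b)
    ultimately show "b \<in> (\<lambda>z. YL k z) ` mu N" using ak by (auto simp: MYi_def inB split: if_splits)
  qed
  then show "finite {b. b \<in> alphY N \<and> MYi N b a \<noteq> 0}" by (rule finite_subset) (simp add: mu_fin[OF N])
next
  fix b
  obtain k' z where bk: "b = YL k' z" by (cases b)
  have "{a. MYi N b a \<noteq> 0} \<subseteq> (\<lambda>al. YTL k' al) ` {..<N}"
  proof
    fix a assume "a \<in> {a. MYi N b a \<noteq> 0}"
    moreover obtain k al where "a = YTL k al" by (cases a)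
    ultimately show "a \<in> (\<lambda>al. YTL k' al) ` {..<N}" using bk by (auto simp: MYi_def split: if_splits)
  qed
  then show "finite {a. MYi N b a \<noteq> 0}" by (rule finite_subset) simp
qed

lemma sum_YL: "finite (mu N) \<Longrightarrow> (\<Sum>b\<in>(\<lambda>z. YL k z) ` mu N. f b) = (\<Sum>z\<in>mu N. f (YL k z))"
  by (subst sum.reindex) (auto simp: inj_on_def)

lemma sum_YTL: "(\<Sum>a\<in>(\<lambda>al. YTL k al) ` {..<N}. f a) = (\<Sum>al<N. f (YTL k al))"
  by (subst sum.reindex) (auto simp: inj_on_def)

lemma lin_inv_Y: assumes N: "N > 0" shows "lin_inv (alphYt N) (alphY N) (MY N) (MYi N)"
proof -
  interpret L1: lin "alphYt N" "alphY N" "MY N" by (rule lin_Y[OF N])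
  interpret L2: lin "alphY N" "alphYt N" "MYi N" by (rule lin_Yi[OF N])
  have Nnz: "(of_nat N :: complex) \<noteq> 0" using N by simp
  show ?thesis
  proof unfold_locales
    fix a c assume a: "a \<in> alphYt N" and c: "c \<in> alphYt N"
    obtain k al where ak: "a = YTL k al" by (cases a)
    obtain k' be where ck: "c = YTL k' be" by (cases c)
    have al: "al < N" and be: "be < N" using a c ak ck by (auto simp: inA)
    have "(\<Sum>b\<in>{b. b \<in> alphY N \<and> MY N a b \<noteq> 0}. MY N a b * MYi N b c) = (\<Sum>b\<in>(\<lambda>z. YL k z) ` mu N. MY N a b * MYi N b c)"
    proof (rule sum.mono_neutral_left)
      show "finite ((\<lambda>z. YL k z) ` mu N)" by (simp add: mu_fin[OF N])
      show "{b. b \<in> alphY N \<and> MY N a b \<noteq> 0} \<subseteq> (\<lambda>z. YL k z) ` mu N"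
      proof
        fix b assume "b \<in> {b. b \<in> alphY N \<and> MY N a b \<noteq> 0}"
        moreover obtain k2 z where "b = YL k2 z" by (cases b)
        ultimately show "b \<in> (\<lambda>z. YL k z) ` mu N" using ak by (auto simp: MY_val[OF N] split: if_splits)
      qed
      show "\<forall>i\<in>(\<lambda>z. YL k z) ` mu N - {b. b \<in> alphY N \<and> MY N a b \<noteq> 0}. MY N a i * MYi N i c = 0"
        using a ak by (auto simp: inB inA)
    qed
    also have "\<dots> = (\<Sum>z\<in>mu N. MY N a (YL k z) * MYi N (YL k z) c)"
      by (rule sum_YL[OF mu_fin[OF N]])
    also have "\<dots> = (if k' = k then (\<Sum>z\<in>mu N. inverse z ^ iota_inv N al * z ^ iota_inv N be) / of_nat N else 0)"
      unfolding sum_divide_distrib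
      by (auto simp: ak ck MY_val[OF N] MYi_def be intro!: sum.cong)
    also have "\<dots> = (if a = c then 1 else 0)"
      using orth1[OF N al be] Nnz ak ck by auto
    finally show "(\<Sum>b\<in>{b. b \<in> alphY N \<and> MY N a b \<noteq> 0}. MY N a b * MYi N b c) = (if a = c then 1 else 0)" .
  next
    fix b d assume b: "b \<in> alphY N" and d: "d \<in> alphY N"
    obtain k z where bk: "b = YL k z" by (cases b)
    obtain k' w where dk: "d = YL k' w" by (cases d)
    have z: "z \<in> mu N" and w: "w \<in> mu N" using b d bk dk by (auto simp: inB)
    have "(\<Sum>a\<in>{a. a \<in> alphYt N \<and> MYi N b a \<noteq> 0}. MYi N b a * MY N a d) = (\<Sum>a\<in>(\<lambda>al. YTL k al) ` {..<N}. MYi N b a * MY N a d)"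
    proof (rule sum.mono_neutral_left)
      show "finite ((\<lambda>al. YTL k al) ` {..<N})" by simp
      show "{a. a \<in> alphYt N \<and> MYi N b a \<noteq> 0} \<subseteq> (\<lambda>al. YTL k al) ` {..<N}"
      proof
        fix a assume "a \<in> {a. a \<in> alphYt N \<and> MYi N b a \<noteq> 0}"
        moreover obtain k2 al where "a = YTL k2 al" by (cases a)
        ultimately show "a \<in> (\<lambda>al. YTL k al) ` {..<N}" using bk by (auto simp: MYi_def split: if_splits)
      qed
      show "\<forall>i\<in>(\<lambda>al. YTL k al) ` {..<N} - {a. a \<in> alphYt N \<and> MYi N b a \<noteq> 0}. MYi N b i * MY N i d = 0"
        using b by (auto simp: inA inB bk MYi_def)
    qed
    also have "\<dots> = (\<Sum>al<N. MYi N b (YTL k al) * MY N (YTL k al) d)"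
      by (rule sum_YTL)
    also have "\<dots> = (if k' = k then (\<Sum>al<N. z ^ iota_inv N al * inverse w ^ iota_inv N al) / of_nat N else 0)"
      unfolding sum_divide_distrib
      by (auto simp: bk dk MY_val[OF N] MYi_def w intro!: sum.cong)
    also have "\<dots> = (if b = d then 1 else 0)"
      using orth2[OF N z w] Nnz bk dk by auto
    finally show "(\<Sum>a\<in>{a. a \<in> alphYt N \<and> MYi N b a \<noteq> 0}. MYi N b a * MY N a d) = (if b = d then 1 else 0)" .
  qed
qed

lemma MY_K: assumes N: "N > 0" shows "MY N a b \<in> QmuN N"
proof -
  have K: "is_subfield (QmuN N)" by (rule QmuN_subfield)
  obtain k al where ak: "a = YTL k al" by (cases a)
  obtain k' z where bk: "b = YL k' z" by (cases b)
  show ?thesis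
  proof (cases "k' = k \<and> z \<in> mu N")
    case True
    then have "inverse z ^ iota_inv N al \<in> QmuN N"
      using K K_mu[OF mu_inverse, of z N] by (intro subfield_pow) auto
    then show ?thesis using True ak bk by (simp add: MY_val[OF N])
  next
    case False
    then have "MY N a b = 0" unfolding ak bk by (simp only: MY_val[OF N] if_not_P[OF False] if_False)
    then show ?thesis using K by (simp add: is_subfield_def)
  qed
qed

lemma MYi_K: assumes N: "N > 0" shows "b \<in> alphY N \<Longrightarrow> MYi N b a \<in> QmuN N"
proof -
  have K: "is_subfield (QmuN N)" by (rule QmuN_subfield)
  assume b: "b \<in> alphY N"
  obtain k al where ak: "a = YTL k al" by (cases a)
  obtain k' z where bk: "b = YL k' z" by (cases b)
  have z: "z \<in> mu N" using b bk by (auto simp: inB)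
  have "z ^ iota_inv N al / of_nat N \<in> QmuN N"
    using K K_mu[OF z] by (intro subfield_div subfield_pow subfield_nat)
  then show ?thesis using ak bk K by (simp add: MYi_def is_subfield_def)
qed

lemma FY_eq: "FY N = Ew (alphYt N) (MY N)"
  unfolding FY_def MY_def by (rule ext_Ew) (rule FY_letter_len)

lemma tmapY_eq: "tmap (alphYt N) (FY_letter N) = tFw (alphYt N) (MY N)"
  unfolding MY_def by (rule tmap_tFw) (rule FY_letter_len)

definition QQ :: "nat \<Rightarrow> nat \<Rightarrow> complex \<Rightarrow> (nat \<times> complex \<times> nat \<times> complex) set" where
  "QQ N k z = {(k1, z1, k2, z2). 1 \<le> k1 \<and> 1 \<le> k2 \<and> k1 + k2 = k \<and>
              z1 \<in> mu N \<and> z2 \<in> mu N \<and> z1 * z2 = z}"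

definition E2 :: "nat \<times> complex \<times> nat \<times> complex \<Rightarrow> yl tser" where
  "E2 q = etens [YL (fst q) (fst (snd q))] [YL (fst (snd (snd q))) (snd (snd (snd q)))]"

definition RR :: "nat \<Rightarrow> yl \<Rightarrow> yl tser" where
  "RR N b = (case b of YL k z \<Rightarrow> (\<lambda>t. \<Sum>q\<in>QQ N k z. E2 q t))"

lemma Dst_letter_eq: "Dst_letter N b t = prim b t + RR N b t"
  by (cases b) (simp add: Dst_letter_def RR_def QQ_def E2_def)

lemma QQ_fin: "N > 0 \<Longrightarrow> finite (QQ N k z)"
proof -
  assume N: "N > 0"
  have "QQ N k z \<subseteq> {..k} \<times> mu N \<times> {..k} \<times> mu N" by (auto simp: QQ_def)
  then show ?thesis by (rule finite_subset) (simp add: mu_fin[OF N])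
qed

lemma RR_single: "N > 0 \<Longrightarrow> RR N (YL k z) ([YL k1 z1], [YL k2 z2]) = (if (k1, z1, k2, z2) \<in> QQ N k z then 1 else 0)"
proof -
  assume N: "N > 0"
  have "RR N (YL k z) ([YL k1 z1], [YL k2 z2]) = (\<Sum>q\<in>QQ N k z. if q = (k1, z1, k2, z2) then 1 else 0)"
    unfolding RR_def by (auto simp: E2_def etens_def intro!: sum.cong)
  also have "\<dots> = (if (k1, z1, k2, z2) \<in> QQ N k z then 1 else 0)"
    by (simp add: sum.delta[OF QQ_fin[OF N]])
  finally show ?thesis .
qed

lemma RR_nonsingle: "\<not> (\<exists>k1 z1 k2 z2. u = [YL k1 z1] \<and> w = [YL k2 z2]) \<Longrightarrow> RR N b (u, w) = 0"
  by (cases b) (auto simp: RR_def E2_def etens_def intro!: sum.neutral)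

lemma single_YL: "length u = 1 \<Longrightarrow> \<exists>k z. u = [YL k z]"
proof -
  assume "length u = 1"
  then obtain x where "u = [x]" by (cases u) auto
  moreover obtain k z where "x = YL k z" by (cases x)
  ultimately show ?thesis by blast
qed

lemma coal_Yt: "coal (alphYt N) Dstt_letter gYt"
proof unfold_locales
  fix a assume "a \<in> alphYt N" then show "1 \<le> gYt a" by (auto simp: alphYt_def gYt_def)
next
  fix n
  have "{a. a \<in> alphYt N \<and> gYt a \<le> n} \<subseteq> (\<lambda>(k, al). YTL k al) ` ({..n} \<times> {..<N})"
    by (auto simp: alphYt_def gYt_def)
  then show "finite {a. a \<in> alphYt N \<and> gYt a \<le> n}" by (rule finite_subset) simp
next
  fix a u w assume a: "a \<in> alphYt N" and nz: "Dstt_letter a (u, w) \<noteq> 0"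
  obtain k al where ak: "a = YTL k al" by (cases a)
  have "prim a (u, w) + (\<Sum>k1\<in>{1..<k}. etens [YTL k1 al] [YTL (k - k1) al] (u, w)) \<noteq> 0"
    using nz ak by (simp add: Dstt_letter_def)
  then consider "prim a (u, w) \<noteq> 0" | "(\<Sum>k1\<in>{1..<k}. etens [YTL k1 al] [YTL (k - k1) al] (u, w)) \<noteq> 0"
    by fastforce
  then show "wt gYt u + wt gYt w = gYt a"
  proof cases
    case 1 then show ?thesis by (rule prim_wt)
  next
    case 2
    then obtain k1 where "k1 \<in> {1..<k}" "etens [YTL k1 al] [YTL (k - k1) al] (u, w) \<noteq> 0"
      by (meson sum.not_neutral_contains_not_neutral)
    then show ?thesis using ak by (auto simp: etens_def wt_def gYt_def split: if_splits)
  qed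
qed

lemma coal_Y: assumes N: "N > 0" shows "coal (alphY N) (Dst_letter N) gY"
proof unfold_locales
  fix a assume "a \<in> alphY N" then show "1 \<le> gY a" by (auto simp: alphY_def gY_def)
next
  fix n
  have "{a. a \<in> alphY N \<and> gY a \<le> n} \<subseteq> (\<lambda>(k, z). YL k z) ` ({..n} \<times> mu N)"
    by (auto simp: alphY_def gY_def)
  then show "finite {a. a \<in> alphY N \<and> gY a \<le> n}" by (rule finite_subset) (simp add: mu_fin[OF N])
next
  fix a u w assume a: "a \<in> alphY N" and nz: "Dst_letter N a (u, w) \<noteq> 0"
  obtain k z where ak: "a = YL k z" by (cases a)
  have "prim a (u, w) + RR N a (u, w) \<noteq> 0" using nz by (simp add: Dst_letter_eq)
  then consider "prim a (u, w) \<noteq> 0" | "RR N a (u, w) \<noteq> 0" by fastforce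
  then show "wt gY u + wt gY w = gY a"
  proof cases
    case 1 then show ?thesis by (rule prim_wt)
  next
    case 2
    then have "(\<Sum>q\<in>QQ N k z. E2 q (u, w)) \<noteq> 0" using ak by (simp add: RR_def)
    then obtain q where "q \<in> QQ N k z" "E2 q (u, w) \<noteq> 0"
      by (meson sum.not_neutral_contains_not_neutral)
    then show ?thesis using ak by (auto simp: E2_def etens_def wt_def gY_def QQ_def split: if_splits)
  qed
qed

lemma stuffle_letter:
  assumes N: "N > 0" and a: "a \<in> alphYt N"
  shows "(\<lambda>p. \<Sum>b\<in>{b. b \<in> alphY N \<and> MY N a b \<noteq> 0}. MY N a b * Dst_letter N b p)
         = tFw (alphYt N) (MY N) (Dstt_letter a)"
proof (rule ext, clarify)
  fix u w
  interpret L: lin "alphYt N" "alphY N" "MY N" by (rule lin_Y[OF N])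
  obtain k al where ak: "a = YTL k al" by (cases a)
  have k: "1 \<le> k" and al: "al < N" using a ak by (auto simp: inA)
  let ?Pa = "{b. b \<in> alphY N \<and> MY N a b \<noteq> 0}"
  have fPa: "finite ?Pa" using L.finpost[OF a] by (rule rev_finite_subset) auto
  have sh: "(\<Sum>b\<in>?Pa. MY N a b * prim b (u, w)) = tFw (alphYt N) (MY N) (prim a) (u, w)"
    using fun_cong[OF L.shuffle_letter[OF a], of "(u, w)"] by simp
  have lhs: "(\<Sum>b\<in>?Pa. MY N a b * Dst_letter N b (u, w)) =
        (\<Sum>b\<in>?Pa. MY N a b * prim b (u, w)) + (\<Sum>b\<in>?Pa. MY N a b * RR N b (u, w))"
    by (simp add: Dst_letter_eq distrib_left sum.distrib)
  have rhs: "tFw (alphYt N) (MY N) (Dstt_letter a) (u, w) =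
        tFw (alphYt N) (MY N) (prim a) (u, w) +
        (\<Sum>k1\<in>{1..<k}. Fw (MY N) [YTL k1 al] u * Fw (MY N) [YTL (k - k1) al] w)"
  proof -
    have "Dstt_letter a = (\<lambda>t. prim a t + (\<Sum>k1\<in>{1..<k}. etens [YTL k1 al] [YTL (k - k1) al] t))"
      using ak by (simp add: Dstt_letter_def)
    then have "tFw (alphYt N) (MY N) (Dstt_letter a) (u, w) = tFw (alphYt N) (MY N) (prim a) (u, w) +
        (\<Sum>k1\<in>{1..<k}. tFw (alphYt N) (MY N) (etens [YTL k1 al] [YTL (k - k1) al]) (u, w))"
      by (simp add: L.tF_add L.tF_sum)
    also have "(\<Sum>k1\<in>{1..<k}. tFw (alphYt N) (MY N) (etens [YTL k1 al] [YTL (k - k1) al]) (u, w)) =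
        (\<Sum>k1\<in>{1..<k}. Fw (MY N) [YTL k1 al] u * Fw (MY N) [YTL (k - k1) al] w)"
      by (rule sum.cong[OF refl]) (auto simp: L.tF_etens inA al)
    finally show ?thesis .
  qed
  have main: "(\<Sum>b\<in>?Pa. MY N a b * RR N b (u, w)) =
        (\<Sum>k1\<in>{1..<k}. Fw (MY N) [YTL k1 al] u * Fw (MY N) [YTL (k - k1) al] w)"
  proof (cases "\<exists>k1 z1 k2 z2. u = [YL k1 z1] \<and> w = [YL k2 z2]")
    case False
    have "(\<Sum>b\<in>?Pa. MY N a b * RR N b (u, w)) = 0"
      using RR_nonsingle[OF False] by simp
    moreover have "(\<Sum>k1\<in>{1..<k}. Fw (MY N) [YTL k1 al] u * Fw (MY N) [YTL (k - k1) al] w) = 0"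
    proof (rule sum.neutral, rule ballI)
      fix k1
      have "\<not> (length u = 1 \<and> length w = 1)" using False single_YL by metis
      then show "Fw (MY N) [YTL k1 al] u * Fw (MY N) [YTL (k - k1) al] w = 0"
        by (auto simp: Fw_single)
    qed
    ultimately show ?thesis by simp
  next
    case True
    then obtain k1 z1 k2 z2 where uw: "u = [YL k1 z1]" "w = [YL k2 z2]" by blast
    define C where "C = (1 \<le> k1 \<and> 1 \<le> k2 \<and> k1 + k2 = k \<and> z1 \<in> mu N \<and> z2 \<in> mu N)"
    have "(\<Sum>b\<in>?Pa. MY N a b * RR N b (u, w)) = (\<Sum>b\<in>(\<lambda>z. YL k z) ` mu N. MY N a b * RR N b (u, w))"
    proof (rule sum.mono_neutral_left)
      show "finite ((\<lambda>z. YL k z) ` mu N)" by (simp add: mu_fin[OF N])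
      show "?Pa \<subseteq> (\<lambda>z. YL k z) ` mu N"
      proof
        fix b assume "b \<in> ?Pa"
        moreover obtain k2 z where "b = YL k2 z" by (cases b)
        ultimately show "b \<in> (\<lambda>z. YL k z) ` mu N" using ak by (auto simp: MY_val[OF N] split: if_splits)
      qed
      show "\<forall>i\<in>(\<lambda>z. YL k z) ` mu N - ?Pa. MY N a i * RR N i (u, w) = 0"
        using k by (auto simp: inB)
    qed
    also have "\<dots> = (\<Sum>z\<in>mu N. MY N a (YL k z) * RR N (YL k z) (u, w))"
      by (rule sum_YL[OF mu_fin[OF N]])
    also have "\<dots> = (\<Sum>z\<in>mu N. if z = z1 * z2 then (if C then inverse z ^ iota_inv N al else 0) else 0)"
      by (rule sum.cong[OF refl]) (auto simp: ak uw MY_val[OF N] RR_single[OF N] QQ_def C_def)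
    also have "\<dots> = (if C then inverse z1 ^ iota_inv N al * inverse z2 ^ iota_inv N al else 0)"
      by (auto simp: sum.delta[OF mu_fin[OF N]] C_def mu_mult power_mult_distrib)
    also have "\<dots> = (\<Sum>k1'\<in>{1..<k}. Fw (MY N) [YTL k1' al] u * Fw (MY N) [YTL (k - k1') al] w)"
    proof -
      have "(\<Sum>k1'\<in>{1..<k}. Fw (MY N) [YTL k1' al] u * Fw (MY N) [YTL (k - k1') al] w) =
            (\<Sum>k1'\<in>{1..<k}. if k1' = k1 then (if k2 = k - k1 \<and> z1 \<in> mu N \<and> z2 \<in> mu N
                 then inverse z1 ^ iota_inv N al * inverse z2 ^ iota_inv N al else 0) else 0)"
        by (rule sum.cong[OF refl]) (auto simp: uw MY_val[OF N])
      also have "\<dots> = (if C then inverse z1 ^ iota_inv N al * inverse z2 ^ iota_inv N al else 0)"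
        by (auto simp: C_def)
      finally show ?thesis by simp
    qed
    finally show ?thesis .
  qed
  show "(\<Sum>b\<in>?Pa. MY N a b * Dst_letter N b (u, w)) = tFw (alphYt N) (MY N) (Dstt_letter a) (u, w)"
    using lhs rhs sh main by simp
qed

theorem partY:
  assumes N: "N > 0"
  shows "alg_iso (QmuN N) (alphYt N) (alphY N) (FY N) \<and>
          (\<forall>S\<in>ser (QmuN N) (alphYt N).
             Dst N (FY N S) = tmap (alphYt N) (FY_letter N) (Dstt N S))"
proof
  interpret li: lin_inv "alphYt N" "alphY N" "MY N" "MYi N" by (rule lin_inv_Y[OF N])
  show "alg_iso (QmuN N) (alphYt N) (alphY N) (FY N)"
    unfolding FY_eq
    by (rule li.alg_iso_E[OF QmuN_subfield]) (auto intro: MY_K[OF N] MYi_K[OF N])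
  interpret h: hopf "alphYt N" "alphY N" "MY N" Dstt_letter gYt "Dst_letter N" gY
    by (rule hopf.intro[OF lin_Y[OF N] coal_Yt coal_Y[OF N]],
        rule hopf_axioms.intro, rule stuffle_letter[OF N])
  show "\<forall>S\<in>ser (QmuN N) (alphYt N). Dst N (FY N S) = tmap (alphYt N) (FY_letter N) (Dstt N S)"
    unfolding Dst_def Dstt_def FY_eq tmapY_eq using h.hopf_compat by blast
qed

theorem lemma3p4:
  fixes N :: nat
  assumes "3 \<le> N"
  shows "(alg_iso (QmuN N) (alphXt N) (alphX N) (FX N) \<and>
          (\<forall>S\<in>ser (QmuN N) (alphXt N).
             Dsh N (FX N S) = tmap (alphXt N) (F_letter N) (Dsht N S)))
       \<and> (alg_iso (QmuN N) (alphYt N) (alphY N) (FY N) \<and>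
          (\<forall>S\<in>ser (QmuN N) (alphYt N).
             Dst N (FY N S) = tmap (alphYt N) (FY_letter N) (Dstt N S)))"
proof -
  have N: "N > 0" using assms by simp
  show ?thesis using partX[OF N] partY[OF N] by blast
qed

end
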